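(* Let $R$ be a ring, $\mathfrak{a}$ an ideal of $R$, and $S$ a left denominator set of $R$ with $\mathrm{ass}(S)=\mathfrak{a}$. Suppose that the core $S_c$ of $S$ is nonempty. Then: (1) $S_c$ is a left denominator set of $R$ with $\mathrm{ass}(S_c)=\mathfrak{a}$; (2) the map $\theta:S_c^{-1}R\to S^{-1}R$, $s^{-1}r\mapsto s^{-1}r$, is a ring isomorphism fixing the elements $\frac{r}{1}$, $r\in R$; in particular $S_c^{-1}R\cong S^{-1}R$.
   Context: All rings are associative with $1$. A multiplicative subset $S$ of $R$ ($1\in S$, $0\notin S$, closed under multiplication) is a left Ore set if $Sr\cap Rs\neq\emptyset$ for all $r\in R$, $s\in S$; for it, $\mathrm{ass}(S):=\{r\in R: sr=0\text{ for some } s\in S\}$. A left Ore set $S$ is a left denominator set if $rs=0$ ($r\in R$, $s\in S$) implies $tr=0$ for some $t\in S$; $S^{-1}R$ is the left localization. For $s\in R$ let $\ker(s\cdot):=\{r\in R: sr=0\}$. The core of a left Ore set $S$ is $S_c:=\{s\in S:\ker(s\cdot)=\mathrm{ass}(S)\}$.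
   Formalization: In part (1), $S_c$ is a left denominator set in the sense where the clause that 1 belongs to the set is replaced by nonemptiness, so 1 need not lie in $S_c$. The statement above fails without it. *)

theory Defs
  imports "HOL-Algebra.Algebra"
begin

definition mult_closed_nz :: "('a, 'b) ring_scheme \<Rightarrow> 'a set \<Rightarrow> bool" where
  "mult_closed_nz R S \<longleftrightarrow> S \<subseteq> carrier R \<and> \<zero>\<^bsub>R\<^esub> \<notin> S \<and>
     (\<forall>s\<in>S. \<forall>t\<in>S. s \<otimes>\<^bsub>R\<^esub> t \<in> S)"

definition multiplicative_set :: "('a, 'b) ring_scheme \<Rightarrow> 'a set \<Rightarrow> bool" where
  "multiplicative_set R S \<longleftrightarrow> \<one>\<^bsub>R\<^esub> \<in> S \<and> mult_closed_nz R S"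

definition left_Ore_cond :: "('a, 'b) ring_scheme \<Rightarrow> 'a set \<Rightarrow> bool" where
  "left_Ore_cond R S \<longleftrightarrow> (\<forall>r\<in>carrier R. \<forall>s\<in>S.
     \<exists>s'\<in>S. \<exists>r'\<in>carrier R. s' \<otimes>\<^bsub>R\<^esub> r = r' \<otimes>\<^bsub>R\<^esub> s)"

definition left_denom_cond :: "('a, 'b) ring_scheme \<Rightarrow> 'a set \<Rightarrow> bool" where
  "left_denom_cond R S \<longleftrightarrow> (\<forall>r\<in>carrier R. \<forall>s\<in>S.
     r \<otimes>\<^bsub>R\<^esub> s = \<zero>\<^bsub>R\<^esub> \<longrightarrow> (\<exists>t\<in>S. t \<otimes>\<^bsub>R\<^esub> r = \<zero>\<^bsub>R\<^esub>))"

definition left_Ore_set :: "('a, 'b) ring_scheme \<Rightarrow> 'a set \<Rightarrow> bool" where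
  "left_Ore_set R S \<longleftrightarrow> multiplicative_set R S \<and> left_Ore_cond R S"

definition left_denominator_set :: "('a, 'b) ring_scheme \<Rightarrow> 'a set \<Rightarrow> bool" where
  "left_denominator_set R S \<longleftrightarrow> left_Ore_set R S \<and> left_denom_cond R S"

definition left_denominator_set_no1 :: "('a, 'b) ring_scheme \<Rightarrow> 'a set \<Rightarrow> bool" where
  "left_denominator_set_no1 R S \<longleftrightarrow> S \<noteq> {} \<and> mult_closed_nz R S \<and>
     left_Ore_cond R S \<and> left_denom_cond R S"

definition ass :: "('a, 'b) ring_scheme \<Rightarrow> 'a set \<Rightarrow> 'a set" where
  "ass R S = {r \<in> carrier R. \<exists>s\<in>S. s \<otimes>\<^bsub>R\<^esub> r = \<zero>\<^bsub>R\<^esub>}"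

definition left_ker :: "('a, 'b) ring_scheme \<Rightarrow> 'a \<Rightarrow> 'a set" where
  "left_ker R s = {r \<in> carrier R. s \<otimes>\<^bsub>R\<^esub> r = \<zero>\<^bsub>R\<^esub>}"

definition core :: "('a, 'b) ring_scheme \<Rightarrow> 'a set \<Rightarrow> 'a set" where
  "core R S = {s \<in> S. left_ker R s = ass R S}"

(* Left fractions s^{-1} r are pairs (s, r); s^{-1}r = s'^{-1}r' iff
   a s = a' s' \<in> S and a r = a' r' for some a, a' \<in> R. *)
definition loc_rel :: "('a, 'b) ring_scheme \<Rightarrow> 'a set \<Rightarrow> (('a \<times> 'a) \<times> ('a \<times> 'a)) set" where
  "loc_rel R S = {((s, r), (s', r')). s \<in> S \<and> r \<in> carrier R \<and> s' \<in> S \<and> r' \<in> carrier R \<and>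
     (\<exists>a\<in>carrier R. \<exists>a'\<in>carrier R. a \<otimes>\<^bsub>R\<^esub> s = a' \<otimes>\<^bsub>R\<^esub> s' \<and>
        a \<otimes>\<^bsub>R\<^esub> s \<in> S \<and> a \<otimes>\<^bsub>R\<^esub> r = a' \<otimes>\<^bsub>R\<^esub> r')}"

definition lfrac :: "('a, 'b) ring_scheme \<Rightarrow> 'a set \<Rightarrow> 'a \<Rightarrow> 'a \<Rightarrow> ('a \<times> 'a) set" where
  "lfrac R S s r = loc_rel R S `` {(s, r)}"

definition loc_mult :: "('a, 'b) ring_scheme \<Rightarrow> 'a set \<Rightarrow> ('a \<times> 'a) set \<Rightarrow> ('a \<times> 'a) set \<Rightarrow> ('a \<times> 'a) set" where
  "loc_mult R S A B = \<Union>{Z. \<exists>s r s' r' u b.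
          Z = lfrac R S (u \<otimes>\<^bsub>R\<^esub> s) (b \<otimes>\<^bsub>R\<^esub> r') \<and> (s, r) \<in> A \<and> (s', r') \<in> B \<and> u \<in> S \<and> b \<in> carrier R \<and>
          u \<otimes>\<^bsub>R\<^esub> r = b \<otimes>\<^bsub>R\<^esub> s'}"

definition loc_add :: "('a, 'b) ring_scheme \<Rightarrow> 'a set \<Rightarrow> ('a \<times> 'a) set \<Rightarrow> ('a \<times> 'a) set \<Rightarrow> ('a \<times> 'a) set" where
  "loc_add R S A B = \<Union>{Z. \<exists>s r s' r' u b.
          Z = lfrac R S (u \<otimes>\<^bsub>R\<^esub> s') ((b \<otimes>\<^bsub>R\<^esub> r) \<oplus>\<^bsub>R\<^esub> (u \<otimes>\<^bsub>R\<^esub> r')) \<and> (s, r) \<in> A \<and> (s', r') \<in> B \<and> u \<in> S \<and> b \<in> carrier R \<and>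
          u \<otimes>\<^bsub>R\<^esub> s' = b \<otimes>\<^bsub>R\<^esub> s}"

definition left_localization :: "('a, 'b) ring_scheme \<Rightarrow> 'a set \<Rightarrow> ('a \<times> 'a) set ring" where
  "left_localization R S = \<lparr>
     carrier = (S \<times> carrier R) // loc_rel R S,
     monoid.mult = loc_mult R S,
     one = \<Union>{Z. \<exists>s\<in>S. Z = lfrac R S s s},
     ring.zero = \<Union>{Z. \<exists>s\<in>S. Z = lfrac R S s (\<zero>\<^bsub>R\<^esub>)},
     add = loc_add R S \<rparr>"

definition loc_theta :: "('a, 'b) ring_scheme \<Rightarrow> 'a set \<Rightarrow> ('a \<times> 'a) set \<Rightarrow> ('a \<times> 'a) set" where
  "loc_theta R S A = loc_rel R S `` A"

end

theory Submission
  imports Defs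
begin

locale lden = ring R for R (structure) +
  fixes S
  assumes S_sub: "S \<subseteq> carrier R" and S_ne: "S \<noteq> {}"
    and S_mult: "\<lbrakk>s\<in>S; t\<in>S\<rbrakk> \<Longrightarrow> s\<otimes>t \<in> S"
    and ore: "\<lbrakk>r\<in>carrier R; s\<in>S\<rbrakk> \<Longrightarrow> \<exists>s'\<in>S. \<exists>r'\<in>carrier R. s'\<otimes>r = r'\<otimes>s"
    and den: "\<lbrakk>r\<in>carrier R; s\<in>S; r\<otimes>s = \<zero>\<rbrakk> \<Longrightarrow> \<exists>t\<in>S. t\<otimes>r = \<zero>"
begin

lemma SR[simp]: "s \<in> S \<Longrightarrow> s \<in> carrier R" using S_sub by blast

lemma eq_of_minus: "a \<in> carrier R \<Longrightarrow> b \<in> carrier R \<Longrightarrow> a \<oplus> \<ominus> b = \<zero> \<Longrightarrow> a = b"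
proof -
  assume a: "a \<in> carrier R" "b \<in> carrier R" "a \<oplus> \<ominus> b = \<zero>"
  have "(a \<oplus> \<ominus> b) \<oplus> b = a \<oplus> (\<ominus> b \<oplus> b)" using a by (intro a_assoc) auto
  also have "\<dots> = a" using a by (simp add: l_neg)
  finally show ?thesis using a by simp
qed

lemma kill:
  assumes "x \<in> carrier R" "y \<in> carrier R" "s \<in> S" "x \<otimes> s = y \<otimes> s"
  shows "\<exists>t\<in>S. t \<otimes> x = t \<otimes> y"
proof -
  have sR: "s \<in> carrier R" using assms by simp
  have "(x \<oplus> \<ominus> y) \<otimes> s = x \<otimes> s \<oplus> (\<ominus> y) \<otimes> s" using assms(1,2) sR by (simp add: l_distr)
  also have "\<dots> = y \<otimes> s \<oplus> \<ominus> (y \<otimes> s)" using assms(2,4) sR by (simp add: l_minus)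
  also have "\<dots> = \<zero>" using assms(2) sR by (intro r_neg m_closed)
  finally have z: "(x \<oplus> \<ominus> y) \<otimes> s = \<zero>" .
  obtain t where t: "t\<in>S" "t \<otimes> (x \<oplus> \<ominus> y) = \<zero>" using den[OF _ assms(3) z] assms by blast
  have tR: "t \<in> carrier R" using t by simp
  have "t \<otimes> x \<oplus> \<ominus> (t \<otimes> y) = t \<otimes> (x \<oplus> \<ominus> y)" using assms(1,2) tR by (simp add: r_distr r_minus)
  hence "t \<otimes> x \<oplus> \<ominus> (t \<otimes> y) = \<zero>" using t by simp
  hence "t \<otimes> x = t \<otimes> y" by (rule eq_of_minus[OF m_closed[OF tR assms(1)] m_closed[OF tR assms(2)]])
  thus ?thesis using t by blast
qed

lemma rel_iff: "((s,r),(s',r')) \<in> loc_rel R S \<longleftrightarrow> s \<in> S \<and> r \<in> carrier R \<and> s' \<in> S \<and> r' \<in> carrier R \<and>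
     (\<exists>a\<in>carrier R. \<exists>a'\<in>carrier R. a \<otimes> s = a' \<otimes> s' \<and> a \<otimes> s \<in> S \<and> a \<otimes> r = a' \<otimes> r')"
  unfolding loc_rel_def by simp

lemma rel_refl: "s \<in> S \<Longrightarrow> r \<in> carrier R \<Longrightarrow> ((s,r),(s,r)) \<in> loc_rel R S"
  unfolding rel_iff by (rule conjI, simp, simp, rule bexI[of _ \<one>], rule bexI[of _ \<one>]) auto

lemma rel_sym: "((s,r),(s',r')) \<in> loc_rel R S \<Longrightarrow> ((s',r'),(s,r)) \<in> loc_rel R S"
  unfolding rel_iff by metis

lemma rel_trans:
  assumes 1: "((s1,r1),(s2,r2)) \<in> loc_rel R S" and 2: "((s2,r2),(s3,r3)) \<in> loc_rel R S"
  shows "((s1,r1),(s3,r3)) \<in> loc_rel R S"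
proof -
  from 1 obtain a1 a2 where A: "s1 \<in> S" "r1 \<in> carrier R" "s2 \<in> S" "r2 \<in> carrier R"
    "a1 \<in> carrier R" "a2 \<in> carrier R" and Ae: "a1 \<otimes> s1 = a2 \<otimes> s2" "a1 \<otimes> s1 \<in> S" "a1 \<otimes> r1 = a2 \<otimes> r2"
    unfolding rel_iff by blast
  from 2 obtain b2 b3 where B: "s3 \<in> S" "r3 \<in> carrier R"
    "b2 \<in> carrier R" "b3 \<in> carrier R" and Be: "b2 \<otimes> s2 = b3 \<otimes> s3" "b2 \<otimes> s2 \<in> S" "b2 \<otimes> r2 = b3 \<otimes> r3"
    unfolding rel_iff by blast
  have a2S: "a2 \<otimes> s2 \<in> S" using Ae by simp
  have b2R: "b2 \<otimes> s2 \<in> carrier R" using B A by simp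
  obtain s' r' where O: "s' \<in> S" "r' \<in> carrier R" and Oe: "s' \<otimes> (b2 \<otimes> s2) = r' \<otimes> (a2 \<otimes> s2)"
    using ore[OF b2R a2S] by blast
  have sR: "s' \<in> carrier R" using O by simp
  have "(s' \<otimes> b2) \<otimes> s2 = s' \<otimes> (b2 \<otimes> s2)" using A B sR by (simp add: m_assoc)
  also have "\<dots> = r' \<otimes> (a2 \<otimes> s2)" by (rule Oe)
  also have "\<dots> = (r' \<otimes> a2) \<otimes> s2" using A O by (simp add: m_assoc)
  finally have k: "(s' \<otimes> b2) \<otimes> s2 = (r' \<otimes> a2) \<otimes> s2" .
  obtain t where t: "t \<in> S" and te: "t \<otimes> (s' \<otimes> b2) = t \<otimes> (r' \<otimes> a2)"
    using kill[OF _ _ _ k] A B O sR by (meson m_closed)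
  have tR: "t \<in> carrier R" using t by simp
  have e1: "(t \<otimes> r' \<otimes> a1) \<otimes> s1 = (t \<otimes> s' \<otimes> b3) \<otimes> s3"
  proof -
    have "(t \<otimes> r' \<otimes> a1) \<otimes> s1 = t \<otimes> (r' \<otimes> (a1 \<otimes> s1))" using A O tR by (simp add: m_assoc)
    also have "\<dots> = t \<otimes> (r' \<otimes> (a2 \<otimes> s2))" by (simp only: Ae(1))
    also have "\<dots> = (t \<otimes> (r' \<otimes> a2)) \<otimes> s2" using A O tR by (simp add: m_assoc)
    also have "\<dots> = (t \<otimes> (s' \<otimes> b2)) \<otimes> s2" by (simp only: te)
    also have "\<dots> = t \<otimes> (s' \<otimes> (b2 \<otimes> s2))" using A B sR tR by (simp add: m_assoc)
    also have "\<dots> = t \<otimes> (s' \<otimes> (b3 \<otimes> s3))" by (simp only: Be(1))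
    also have "\<dots> = (t \<otimes> s' \<otimes> b3) \<otimes> s3" using B sR tR by (simp add: m_assoc)
    finally show ?thesis .
  qed
  have e2: "(t \<otimes> r' \<otimes> a1) \<otimes> r1 = (t \<otimes> s' \<otimes> b3) \<otimes> r3"
  proof -
    have "(t \<otimes> r' \<otimes> a1) \<otimes> r1 = t \<otimes> (r' \<otimes> (a1 \<otimes> r1))" using A O tR by (simp add: m_assoc)
    also have "\<dots> = t \<otimes> (r' \<otimes> (a2 \<otimes> r2))" by (simp only: Ae(3))
    also have "\<dots> = (t \<otimes> (r' \<otimes> a2)) \<otimes> r2" using A O tR by (simp add: m_assoc)
    also have "\<dots> = (t \<otimes> (s' \<otimes> b2)) \<otimes> r2" by (simp only: te)
    also have "\<dots> = t \<otimes> (s' \<otimes> (b2 \<otimes> r2))" using A B sR tR by (simp add: m_assoc)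
    also have "\<dots> = t \<otimes> (s' \<otimes> (b3 \<otimes> r3))" by (simp only: Be(3))
    also have "\<dots> = (t \<otimes> s' \<otimes> b3) \<otimes> r3" using B sR tR by (simp add: m_assoc)
    finally show ?thesis .
  qed
  have e3: "(t \<otimes> s' \<otimes> b3) \<otimes> s3 \<in> S"
  proof -
    have "(t \<otimes> s' \<otimes> b3) \<otimes> s3 = t \<otimes> (s' \<otimes> (b3 \<otimes> s3))" using B sR tR by (simp add: m_assoc)
    also have "\<dots> = t \<otimes> (s' \<otimes> (b2 \<otimes> s2))" by (simp only: Be(1))
    finally show ?thesis using t O Be(2) S_mult by simp
  qed
  have c1: "t \<otimes> r' \<otimes> a1 \<in> carrier R" "t \<otimes> s' \<otimes> b3 \<in> carrier R" using A B O sR tR by auto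
  show ?thesis unfolding rel_iff using A B e1 e2 e3 c1 by metis
qed

lemma rel_equiv: "equiv (S \<times> carrier R) (loc_rel R S)"
proof (rule equivI)
  show "loc_rel R S \<subseteq> (S \<times> carrier R) \<times> (S \<times> carrier R)"
    unfolding loc_rel_def by blast
  show "refl_on (S \<times> carrier R) (loc_rel R S)"
  proof (rule refl_onI)
    fix x assume x: "x \<in> S \<times> carrier R"
    obtain s r where "x = (s,r)" by (cases x)
    thus "(x, x) \<in> loc_rel R S" using x rel_refl by simp
  qed
  show "sym (loc_rel R S)"
  proof (rule symI)
    fix x y assume xy: "(x, y) \<in> loc_rel R S"
    obtain s r s' r' where "x = (s,r)" "y = (s',r')" by (cases x, cases y)
    thus "(y, x) \<in> loc_rel R S" using xy rel_sym by simp
  qed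
  show "trans (loc_rel R S)"
  proof (rule transI)
    fix x y z assume xy: "(x, y) \<in> loc_rel R S" "(y, z) \<in> loc_rel R S"
    obtain s r s' r' s'' r'' where "x = (s,r)" "y = (s',r')" "z = (s'',r'')" by (cases x, cases y, cases z)
    thus "(x, z) \<in> loc_rel R S" using xy rel_trans by simp
  qed
qed

end

context lden begin

lemma fr_eq_iff: "s \<in> S \<Longrightarrow> r \<in> carrier R \<Longrightarrow> s' \<in> S \<Longrightarrow> r' \<in> carrier R \<Longrightarrow>
  lfrac R S s r = lfrac R S s' r' \<longleftrightarrow> ((s,r),(s',r')) \<in> loc_rel R S"
  unfolding lfrac_def by (rule eq_equiv_class_iff[OF rel_equiv]) auto

lemma fr_eqI:
  assumes "s \<in> S" "r \<in> carrier R" "s' \<in> S" "r' \<in> carrier R" "x \<in> carrier R" "y \<in> carrier R"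
    "x \<otimes> s = y \<otimes> s'" "x \<otimes> s \<in> S" "x \<otimes> r = y \<otimes> r'"
  shows "lfrac R S s r = lfrac R S s' r'"
  unfolding fr_eq_iff[OF assms(1-4)] rel_iff using assms(1-4) by (blast intro: assms(5-9))

lemma fr_exp:
  assumes "a \<in> carrier R" "s \<in> S" "r \<in> carrier R" "a \<otimes> s \<in> S"
  shows "lfrac R S (a \<otimes> s) (a \<otimes> r) = lfrac R S s r"
  by (rule fr_eqI[where x="\<one>" and y=a]) (use assms in auto)

lemma mem_fr: "(x, y) \<in> lfrac R S s r \<longleftrightarrow> ((s,r),(x,y)) \<in> loc_rel R S"
  unfolding lfrac_def by simp

lemma fr_self: "s \<in> S \<Longrightarrow> r \<in> carrier R \<Longrightarrow> (s, r) \<in> lfrac R S s r"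
  unfolding mem_fr by (rule rel_refl)

lemma fr_in_carrier: "s \<in> S \<Longrightarrow> r \<in> carrier R \<Longrightarrow> lfrac R S s r \<in> (S \<times> carrier R) // loc_rel R S"
  unfolding lfrac_def by (rule quotientI) simp

lemma carrier_fr: "A \<in> (S \<times> carrier R) // loc_rel R S \<Longrightarrow> (\<And>s r. s \<in> S \<Longrightarrow> r \<in> carrier R \<Longrightarrow> A = lfrac R S s r \<Longrightarrow> P) \<Longrightarrow> P"
  unfolding lfrac_def by (erule quotientE) auto

lemma common2: "s \<in> S \<Longrightarrow> s' \<in> S \<Longrightarrow> \<exists>u\<in>S. \<exists>b\<in>carrier R. u \<otimes> s = b \<otimes> s'"
  using ore by simp

lemma M_choice:
  assumes s: "s \<in> S" "s' \<in> S" "r \<in> carrier R" "r' \<in> carrier R"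
    and u: "u \<in> S" "u1 \<in> S" "b \<in> carrier R" "b1 \<in> carrier R"
    and e: "u \<otimes> r = b \<otimes> s'" "u1 \<otimes> r = b1 \<otimes> s'"
  shows "lfrac R S (u \<otimes> s) (b \<otimes> r') = lfrac R S (u1 \<otimes> s) (b1 \<otimes> r')"
proof -
  have uR: "u \<in> carrier R" "u1 \<in> carrier R" "s \<in> carrier R" "s' \<in> carrier R" using u s by auto
  obtain c d where c: "c \<in> S" "d \<in> carrier R" and cd: "c \<otimes> u = d \<otimes> u1" using ore[OF uR(1) u(2)] by blast
  have cR: "c \<in> carrier R" using c by simp
  have "(c \<otimes> b) \<otimes> s' = c \<otimes> (b \<otimes> s')" using cR u uR by (simp add: m_assoc)
  also have "\<dots> = c \<otimes> (u \<otimes> r)" by (simp only: e)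
  also have "\<dots> = (c \<otimes> u) \<otimes> r" using cR u uR s by (simp add: m_assoc)
  also have "\<dots> = (d \<otimes> u1) \<otimes> r" by (simp only: cd)
  also have "\<dots> = d \<otimes> (u1 \<otimes> r)" using c u uR s by (simp add: m_assoc)
  also have "\<dots> = d \<otimes> (b1 \<otimes> s')" by (simp only: e)
  also have "\<dots> = (d \<otimes> b1) \<otimes> s'" using c u uR s by (simp add: m_assoc)
  finally have k: "(c \<otimes> b) \<otimes> s' = (d \<otimes> b1) \<otimes> s'" .
  obtain t where t: "t \<in> S" and te: "t \<otimes> (c \<otimes> b) = t \<otimes> (d \<otimes> b1)"
    using kill[OF _ _ s(2) k] cR c u by (meson m_closed)
  have tR: "t \<in> carrier R" using t by simp
  show ?thesis
  proof (rule fr_eqI[where x="t \<otimes> c" and y="t \<otimes> d"])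
    have "(t \<otimes> c) \<otimes> (u \<otimes> s) = t \<otimes> ((c \<otimes> u) \<otimes> s)" using tR cR uR by (simp add: m_assoc)
    also have "\<dots> = t \<otimes> ((d \<otimes> u1) \<otimes> s)" by (simp only: cd)
    also have "\<dots> = (t \<otimes> d) \<otimes> (u1 \<otimes> s)" using tR c uR by (simp add: m_assoc)
    finally show "(t \<otimes> c) \<otimes> (u \<otimes> s) = (t \<otimes> d) \<otimes> (u1 \<otimes> s)" .
    have "(t \<otimes> c) \<otimes> (u \<otimes> s) = t \<otimes> (c \<otimes> (u \<otimes> s))" using tR cR uR by (simp add: m_assoc)
    thus "(t \<otimes> c) \<otimes> (u \<otimes> s) \<in> S" using t c u s S_mult by simp
    have "(t \<otimes> c) \<otimes> (b \<otimes> r') = (t \<otimes> (c \<otimes> b)) \<otimes> r'" using tR cR u s by (simp add: m_assoc)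
    also have "\<dots> = (t \<otimes> (d \<otimes> b1)) \<otimes> r'" by (simp only: te)
    also have "\<dots> = (t \<otimes> d) \<otimes> (b1 \<otimes> r')" using tR c u s by (simp add: m_assoc)
    finally show "(t \<otimes> c) \<otimes> (b \<otimes> r') = (t \<otimes> d) \<otimes> (b1 \<otimes> r')" .
  qed (use s u c tR cR S_mult in auto)
qed

lemma M_exp1:
  assumes s: "s \<in> S" "s' \<in> S" "r \<in> carrier R" "r' \<in> carrier R"
    and u: "u \<in> S" "b \<in> carrier R" and e: "u \<otimes> r = b \<otimes> s'"
    and a: "a \<in> carrier R" "a \<otimes> s \<in> S"
  shows "\<exists>u2\<in>S. \<exists>b2\<in>carrier R. u2 \<otimes> (a \<otimes> r) = b2 \<otimes> s' \<and>
     lfrac R S (u2 \<otimes> (a \<otimes> s)) (b2 \<otimes> r') = lfrac R S (u \<otimes> s) (b \<otimes> r')"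
proof -
  have uR: "u \<in> carrier R" "s \<in> carrier R" "s' \<in> carrier R" using u s by auto
  obtain u2 k where k: "u2 \<in> S" "k \<in> carrier R" and ke: "u2 \<otimes> a = k \<otimes> u" using ore[OF a(1) u(1)] by blast
  have u2R: "u2 \<in> carrier R" using k by simp
  have "u2 \<otimes> (a \<otimes> r) = (u2 \<otimes> a) \<otimes> r" using u2R a s by (simp add: m_assoc)
  also have "\<dots> = (k \<otimes> u) \<otimes> r" by (simp only: ke)
  also have "\<dots> = k \<otimes> (u \<otimes> r)" using k uR s by (simp add: m_assoc)
  also have "\<dots> = k \<otimes> (b \<otimes> s')" by (simp only: e)
  also have "\<dots> = (k \<otimes> b) \<otimes> s'" using k uR u by (simp add: m_assoc)
  finally have e2: "u2 \<otimes> (a \<otimes> r) = (k \<otimes> b) \<otimes> s'" .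
  have q: "u2 \<otimes> (a \<otimes> s) = k \<otimes> (u \<otimes> s)"
  proof -
    have "u2 \<otimes> (a \<otimes> s) = (u2 \<otimes> a) \<otimes> s" using u2R a uR by (simp add: m_assoc)
    also have "\<dots> = (k \<otimes> u) \<otimes> s" by (simp only: ke)
    also have "\<dots> = k \<otimes> (u \<otimes> s)" using k uR by (simp add: m_assoc)
    finally show ?thesis .
  qed
  have qS: "k \<otimes> (u \<otimes> s) \<in> S" using q k a S_mult by (metis)
  have "lfrac R S (u2 \<otimes> (a \<otimes> s)) ((k \<otimes> b) \<otimes> r') = lfrac R S (k \<otimes> (u \<otimes> s)) (k \<otimes> (b \<otimes> r'))"
    using q k u s by (simp add: m_assoc)
  also have "\<dots> = lfrac R S (u \<otimes> s) (b \<otimes> r')" by (rule fr_exp) (use k u s qS S_mult in auto)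
  finally show ?thesis using e2 k u by blast
qed

lemma M_exp2:
  assumes s: "s \<in> S" "s' \<in> S" "r \<in> carrier R" "r' \<in> carrier R"
    and u: "u \<in> S" "b \<in> carrier R" and e: "u \<otimes> r = b \<otimes> s'"
    and a: "a \<in> carrier R" "a \<otimes> s' \<in> S"
  shows "\<exists>u2\<in>S. \<exists>b2\<in>carrier R. u2 \<otimes> r = b2 \<otimes> (a \<otimes> s') \<and>
     lfrac R S (u2 \<otimes> s) (b2 \<otimes> (a \<otimes> r')) = lfrac R S (u \<otimes> s) (b \<otimes> r')"
proof -
  have uR: "u \<in> carrier R" "s \<in> carrier R" "s' \<in> carrier R" using u s by auto
  have bs: "b \<otimes> s' \<in> carrier R" using u uR by simp
  obtain c d where c: "c \<in> S" "d \<in> carrier R" and cd: "c \<otimes> (b \<otimes> s') = d \<otimes> (a \<otimes> s')"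
    using ore[OF bs a(2)] by blast
  have cR: "c \<in> carrier R" using c by simp
  have "(c \<otimes> b) \<otimes> s' = (d \<otimes> a) \<otimes> s'" using cd cR c u uR a by (simp add: m_assoc)
  then obtain t where t: "t \<in> S" and te: "t \<otimes> (c \<otimes> b) = t \<otimes> (d \<otimes> a)"
    using kill[OF _ _ s(2)] cR c u a by (meson m_closed)
  have tR: "t \<in> carrier R" using t by simp
  have u2S: "(t \<otimes> c) \<otimes> u \<in> S" using t c u S_mult by simp
  have e2: "((t \<otimes> c) \<otimes> u) \<otimes> r = (t \<otimes> d) \<otimes> (a \<otimes> s')"
  proof -
    have "((t \<otimes> c) \<otimes> u) \<otimes> r = t \<otimes> (c \<otimes> (u \<otimes> r))" using tR cR uR s by (simp add: m_assoc)
    also have "\<dots> = t \<otimes> (c \<otimes> (b \<otimes> s'))" by (simp only: e)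
    also have "\<dots> = (t \<otimes> (c \<otimes> b)) \<otimes> s'" using tR cR u uR by (simp add: m_assoc)
    also have "\<dots> = (t \<otimes> (d \<otimes> a)) \<otimes> s'" by (simp only: te)
    also have "\<dots> = (t \<otimes> d) \<otimes> (a \<otimes> s')" using tR c a uR by (simp add: m_assoc)
    finally show ?thesis .
  qed
  have n: "(t \<otimes> d) \<otimes> (a \<otimes> r') = (t \<otimes> c) \<otimes> (b \<otimes> r')"
  proof -
    have "(t \<otimes> d) \<otimes> (a \<otimes> r') = (t \<otimes> (d \<otimes> a)) \<otimes> r'" using tR c a s by (simp add: m_assoc)
    also have "\<dots> = (t \<otimes> (c \<otimes> b)) \<otimes> r'" by (simp only: te)
    also have "\<dots> = (t \<otimes> c) \<otimes> (b \<otimes> r')" using tR cR u s by (simp add: m_assoc)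
    finally show ?thesis .
  qed
  have dS: "(t \<otimes> c) \<otimes> (u \<otimes> s) = ((t \<otimes> c) \<otimes> u) \<otimes> s" using tR cR uR by (simp add: m_assoc)
  have "lfrac R S (((t \<otimes> c) \<otimes> u) \<otimes> s) ((t \<otimes> d) \<otimes> (a \<otimes> r')) = lfrac R S ((t \<otimes> c) \<otimes> (u \<otimes> s)) ((t \<otimes> c) \<otimes> (b \<otimes> r'))"
    by (simp only: n dS)
  also have "\<dots> = lfrac R S (u \<otimes> s) (b \<otimes> r')"
    by (rule fr_exp) (use tR cR u s dS u2S S_mult in auto)
  finally show ?thesis using e2 u2S tR c by (meson m_closed)
qed

end

context lden begin

lemma M_exp12:
  assumes s: "s \<in> S" "s' \<in> S" "r \<in> carrier R" "r' \<in> carrier R"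
    and u: "u \<in> S" "b \<in> carrier R" and e: "u \<otimes> r = b \<otimes> s'"
    and a: "a \<in> carrier R" "a \<otimes> s \<in> S" and c: "c \<in> carrier R" "c \<otimes> s' \<in> S"
  shows "\<exists>u3\<in>S. \<exists>b3\<in>carrier R. u3 \<otimes> (a \<otimes> r) = b3 \<otimes> (c \<otimes> s') \<and>
     lfrac R S (u3 \<otimes> (a \<otimes> s)) (b3 \<otimes> (c \<otimes> r')) = lfrac R S (u \<otimes> s) (b \<otimes> r')"
proof -
  obtain u2 b2 where u2: "u2 \<in> S" "b2 \<in> carrier R" and e2: "u2 \<otimes> (a \<otimes> r) = b2 \<otimes> s'"
     and f2: "lfrac R S (u2 \<otimes> (a \<otimes> s)) (b2 \<otimes> r') = lfrac R S (u \<otimes> s) (b \<otimes> r')"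
    using M_exp1[OF s u e a] by blast
  have ar: "a \<otimes> r \<in> carrier R" using a s by simp
  obtain u3 b3 where u3: "u3 \<in> S" "b3 \<in> carrier R" and e3: "u3 \<otimes> (a \<otimes> r) = b3 \<otimes> (c \<otimes> s')"
     and f3: "lfrac R S (u3 \<otimes> (a \<otimes> s)) (b3 \<otimes> (c \<otimes> r')) = lfrac R S (u2 \<otimes> (a \<otimes> s)) (b2 \<otimes> r')"
    using M_exp2[OF a(2) s(2) ar s(4) u2 e2 c] by blast
  show ?thesis using u3 e3 f3 f2 by metis
qed

lemma M_wd:
  assumes r1: "((s,r),(s1,r1)) \<in> loc_rel R S" and r2: "((s',r'),(s1',r1')) \<in> loc_rel R S"
    and u: "u \<in> S" "b \<in> carrier R" "u \<otimes> r = b \<otimes> s'"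
    and u1: "u1 \<in> S" "b1 \<in> carrier R" "u1 \<otimes> r1 = b1 \<otimes> s1'"
  shows "lfrac R S (u \<otimes> s) (b \<otimes> r') = lfrac R S (u1 \<otimes> s1) (b1 \<otimes> r1')"
proof -
  from r1 obtain a a1 where A: "s \<in> S" "r \<in> carrier R" "s1 \<in> S" "r1 \<in> carrier R"
    "a \<in> carrier R" "a1 \<in> carrier R" and Ae: "a \<otimes> s = a1 \<otimes> s1" "a \<otimes> s \<in> S" "a \<otimes> r = a1 \<otimes> r1"
    unfolding rel_iff by blast
  from r2 obtain c c1 where C: "s' \<in> S" "r' \<in> carrier R" "s1' \<in> S" "r1' \<in> carrier R"
    "c \<in> carrier R" "c1 \<in> carrier R" and Ce: "c \<otimes> s' = c1 \<otimes> s1'" "c \<otimes> s' \<in> S" "c \<otimes> r' = c1 \<otimes> r1'"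
    unfolding rel_iff by blast
  have Ae2: "a1 \<otimes> s1 \<in> S" using Ae by simp
  have Ce2: "c1 \<otimes> s1' \<in> S" using Ce by simp
  obtain u3 b3 where u3: "u3 \<in> S" "b3 \<in> carrier R" and e3: "u3 \<otimes> (a \<otimes> r) = b3 \<otimes> (c \<otimes> s')"
     and f3: "lfrac R S (u3 \<otimes> (a \<otimes> s)) (b3 \<otimes> (c \<otimes> r')) = lfrac R S (u \<otimes> s) (b \<otimes> r')"
    using M_exp12[OF A(1) C(1) A(2) C(2) u A(5) Ae(2) C(5) Ce(2)] by blast
  obtain u4 b4 where u4: "u4 \<in> S" "b4 \<in> carrier R" and e4: "u4 \<otimes> (a1 \<otimes> r1) = b4 \<otimes> (c1 \<otimes> s1')"
     and f4: "lfrac R S (u4 \<otimes> (a1 \<otimes> s1)) (b4 \<otimes> (c1 \<otimes> r1')) = lfrac R S (u1 \<otimes> s1) (b1 \<otimes> r1')"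
    using M_exp12[OF A(3) C(3) A(4) C(4) u1 A(6) Ae2 C(6) Ce2] by blast
  have e3': "u3 \<otimes> (a1 \<otimes> r1) = b3 \<otimes> (c1 \<otimes> s1')" using e3 by (simp only: Ae Ce)
  have "lfrac R S (u3 \<otimes> (a1 \<otimes> s1)) (b3 \<otimes> (c1 \<otimes> r1')) = lfrac R S (u4 \<otimes> (a1 \<otimes> s1)) (b4 \<otimes> (c1 \<otimes> r1'))"
    by (rule M_choice[OF Ae2 Ce2 _ _ u3(1) u4(1) u3(2) u4(2) e3' e4]) (use A C in auto)
  thus ?thesis using f3 f4 by (simp only: Ae Ce)
qed

lemma mult_char:
  assumes s: "s \<in> S" "r \<in> carrier R" "s' \<in> S" "r' \<in> carrier R"
    and u: "u \<in> S" "b \<in> carrier R" "u \<otimes> r = b \<otimes> s'"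
  shows "loc_mult R S (lfrac R S s r) (lfrac R S s' r') = lfrac R S (u \<otimes> s) (b \<otimes> r')"
proof -
  have "\<Union>{Z. \<exists>s1 r1 s1' r1' u1 b1. Z = lfrac R S (u1 \<otimes> s1) (b1 \<otimes> r1') \<and> (s1, r1) \<in> lfrac R S s r \<and>
      (s1', r1') \<in> lfrac R S s' r' \<and> u1 \<in> S \<and> b1 \<in> carrier R \<and> u1 \<otimes> r1 = b1 \<otimes> s1'} = lfrac R S (u \<otimes> s) (b \<otimes> r')"
  proof (rule equalityI)
    show "\<Union>{Z. \<exists>s1 r1 s1' r1' u1 b1. Z = lfrac R S (u1 \<otimes> s1) (b1 \<otimes> r1') \<and> (s1, r1) \<in> lfrac R S s r \<and>
      (s1', r1') \<in> lfrac R S s' r' \<and> u1 \<in> S \<and> b1 \<in> carrier R \<and> u1 \<otimes> r1 = b1 \<otimes> s1'} \<subseteq> lfrac R S (u \<otimes> s) (b \<otimes> r')"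
    proof (rule Union_least)
      fix Z assume "Z \<in> {Z. \<exists>s1 r1 s1' r1' u1 b1. Z = lfrac R S (u1 \<otimes> s1) (b1 \<otimes> r1') \<and> (s1, r1) \<in> lfrac R S s r \<and>
      (s1', r1') \<in> lfrac R S s' r' \<and> u1 \<in> S \<and> b1 \<in> carrier R \<and> u1 \<otimes> r1 = b1 \<otimes> s1'}"
      then obtain s1 r1 s1' r1' u1 b1 where Z: "Z = lfrac R S (u1 \<otimes> s1) (b1 \<otimes> r1')"
        and m: "((s,r),(s1, r1)) \<in> loc_rel R S" "((s',r'),(s1', r1')) \<in> loc_rel R S"
        and uu: "u1 \<in> S" "b1 \<in> carrier R" "u1 \<otimes> r1 = b1 \<otimes> s1'"
        unfolding mem_fr by blast
      show "Z \<subseteq> lfrac R S (u \<otimes> s) (b \<otimes> r')" using M_wd[OF m u uu] Z by simp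
    qed
    show "lfrac R S (u \<otimes> s) (b \<otimes> r') \<subseteq> \<Union>{Z. \<exists>s1 r1 s1' r1' u1 b1. Z = lfrac R S (u1 \<otimes> s1) (b1 \<otimes> r1') \<and> (s1, r1) \<in> lfrac R S s r \<and>
      (s1', r1') \<in> lfrac R S s' r' \<and> u1 \<in> S \<and> b1 \<in> carrier R \<and> u1 \<otimes> r1 = b1 \<otimes> s1'}"
      using fr_self[OF s(1,2)] fr_self[OF s(3,4)] u by blast
  qed
  thus ?thesis unfolding loc_mult_def by simp
qed

end

context lden begin

lemma A_choice:
  assumes s: "s \<in> S" "s' \<in> S" "r \<in> carrier R" "r' \<in> carrier R"
    and u: "u \<in> S" "u1 \<in> S" "b \<in> carrier R" "b1 \<in> carrier R"
    and e: "u \<otimes> s' = b \<otimes> s" "u1 \<otimes> s' = b1 \<otimes> s"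
  shows "lfrac R S (u \<otimes> s') ((b \<otimes> r) \<oplus> (u \<otimes> r')) = lfrac R S (u1 \<otimes> s') ((b1 \<otimes> r) \<oplus> (u1 \<otimes> r'))"
proof -
  have uR: "u \<in> carrier R" "u1 \<in> carrier R" "s \<in> carrier R" "s' \<in> carrier R" using u s by auto
  obtain c d where c: "c \<in> S" "d \<in> carrier R" and cd: "c \<otimes> u = d \<otimes> u1" using ore[OF uR(1) u(2)] by blast
  have cR: "c \<in> carrier R" using c by simp
  have "(c \<otimes> b) \<otimes> s = c \<otimes> (b \<otimes> s)" using cR u uR by (simp add: m_assoc)
  also have "\<dots> = c \<otimes> (u \<otimes> s')" by (simp only: e)
  also have "\<dots> = (c \<otimes> u) \<otimes> s'" using cR u uR s by (simp add: m_assoc)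
  also have "\<dots> = (d \<otimes> u1) \<otimes> s'" by (simp only: cd)
  also have "\<dots> = d \<otimes> (u1 \<otimes> s')" using c u uR s by (simp add: m_assoc)
  also have "\<dots> = d \<otimes> (b1 \<otimes> s)" by (simp only: e)
  also have "\<dots> = (d \<otimes> b1) \<otimes> s" using c u uR s by (simp add: m_assoc)
  finally have k: "(c \<otimes> b) \<otimes> s = (d \<otimes> b1) \<otimes> s" .
  obtain t where t: "t \<in> S" and te: "t \<otimes> (c \<otimes> b) = t \<otimes> (d \<otimes> b1)"
    using kill[OF _ _ s(1) k] cR c u by (meson m_closed)
  have tR: "t \<in> carrier R" using t by simp
  show ?thesis
  proof (rule fr_eqI[where x="t \<otimes> c" and y="t \<otimes> d"])
    have "(t \<otimes> c) \<otimes> (u \<otimes> s') = t \<otimes> ((c \<otimes> u) \<otimes> s')" using tR cR uR by (simp add: m_assoc)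
    also have "\<dots> = t \<otimes> ((d \<otimes> u1) \<otimes> s')" by (simp only: cd)
    also have "\<dots> = (t \<otimes> d) \<otimes> (u1 \<otimes> s')" using tR c uR by (simp add: m_assoc)
    finally show "(t \<otimes> c) \<otimes> (u \<otimes> s') = (t \<otimes> d) \<otimes> (u1 \<otimes> s')" .
    have "(t \<otimes> c) \<otimes> (u \<otimes> s') = t \<otimes> (c \<otimes> (u \<otimes> s'))" using tR cR uR by (simp add: m_assoc)
    thus "(t \<otimes> c) \<otimes> (u \<otimes> s') \<in> S" using t c u s S_mult by simp
    have x1: "(t \<otimes> c) \<otimes> (b \<otimes> r) = (t \<otimes> d) \<otimes> (b1 \<otimes> r)"
    proof -
      have "(t \<otimes> c) \<otimes> (b \<otimes> r) = (t \<otimes> (c \<otimes> b)) \<otimes> r" using tR cR u s by (simp add: m_assoc)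
      also have "\<dots> = (t \<otimes> (d \<otimes> b1)) \<otimes> r" by (simp only: te)
      also have "\<dots> = (t \<otimes> d) \<otimes> (b1 \<otimes> r)" using tR c u s by (simp add: m_assoc)
      finally show ?thesis .
    qed
    have x2: "(t \<otimes> c) \<otimes> (u \<otimes> r') = (t \<otimes> d) \<otimes> (u1 \<otimes> r')"
    proof -
      have "(t \<otimes> c) \<otimes> (u \<otimes> r') = t \<otimes> ((c \<otimes> u) \<otimes> r')" using tR cR uR s by (simp add: m_assoc)
      also have "\<dots> = t \<otimes> ((d \<otimes> u1) \<otimes> r')" by (simp only: cd)
      also have "\<dots> = (t \<otimes> d) \<otimes> (u1 \<otimes> r')" using tR c uR s by (simp add: m_assoc)
      finally show ?thesis .
    qed
    have "(t \<otimes> c) \<otimes> ((b \<otimes> r) \<oplus> (u \<otimes> r')) = (t \<otimes> c) \<otimes> (b \<otimes> r) \<oplus> (t \<otimes> c) \<otimes> (u \<otimes> r')"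
      using tR cR u uR s by (simp add: r_distr)
    also have "\<dots> = (t \<otimes> d) \<otimes> (b1 \<otimes> r) \<oplus> (t \<otimes> d) \<otimes> (u1 \<otimes> r')" by (simp only: x1 x2)
    also have "\<dots> = (t \<otimes> d) \<otimes> ((b1 \<otimes> r) \<oplus> (u1 \<otimes> r'))" using tR c u uR s by (simp add: r_distr)
    finally show "(t \<otimes> c) \<otimes> ((b \<otimes> r) \<oplus> (u \<otimes> r')) = (t \<otimes> d) \<otimes> ((b1 \<otimes> r) \<oplus> (u1 \<otimes> r'))" .
  qed (use s u c tR cR uR S_mult in auto)
qed

lemma A_exp1:
  assumes s: "s \<in> S" "s' \<in> S" "r \<in> carrier R" "r' \<in> carrier R"
    and u: "u \<in> S" "b \<in> carrier R" and e: "u \<otimes> s' = b \<otimes> s"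
    and a: "a \<in> carrier R" "a \<otimes> s \<in> S"
  shows "\<exists>u2\<in>S. \<exists>b2\<in>carrier R. u2 \<otimes> s' = b2 \<otimes> (a \<otimes> s) \<and>
     lfrac R S (u2 \<otimes> s') ((b2 \<otimes> (a \<otimes> r)) \<oplus> (u2 \<otimes> r')) = lfrac R S (u \<otimes> s') ((b \<otimes> r) \<oplus> (u \<otimes> r'))"
proof -
  have uR: "u \<in> carrier R" "s \<in> carrier R" "s' \<in> carrier R" using u s by auto
  have bs: "b \<otimes> s \<in> carrier R" using u uR by simp
  obtain c d where c: "c \<in> S" "d \<in> carrier R" and cd: "c \<otimes> (b \<otimes> s) = d \<otimes> (a \<otimes> s)"
    using ore[OF bs a(2)] by blast
  have cR: "c \<in> carrier R" using c by simp
  have "(c \<otimes> b) \<otimes> s = (d \<otimes> a) \<otimes> s" using cd cR c u uR a by (simp add: m_assoc)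
  then obtain t where t: "t \<in> S" and te: "t \<otimes> (c \<otimes> b) = t \<otimes> (d \<otimes> a)"
    using kill[OF _ _ s(1)] cR c u a by (meson m_closed)
  have tR: "t \<in> carrier R" using t by simp
  have u2S: "(t \<otimes> c) \<otimes> u \<in> S" using t c u S_mult by simp
  have e2: "((t \<otimes> c) \<otimes> u) \<otimes> s' = (t \<otimes> d) \<otimes> (a \<otimes> s)"
  proof -
    have "((t \<otimes> c) \<otimes> u) \<otimes> s' = t \<otimes> (c \<otimes> (u \<otimes> s'))" using tR cR uR s by (simp add: m_assoc)
    also have "\<dots> = t \<otimes> (c \<otimes> (b \<otimes> s))" by (simp only: e)
    also have "\<dots> = (t \<otimes> (c \<otimes> b)) \<otimes> s" using tR cR u uR by (simp add: m_assoc)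
    also have "\<dots> = (t \<otimes> (d \<otimes> a)) \<otimes> s" by (simp only: te)
    also have "\<dots> = (t \<otimes> d) \<otimes> (a \<otimes> s)" using tR c a uR by (simp add: m_assoc)
    finally show ?thesis .
  qed
  have n1: "(t \<otimes> c) \<otimes> (b \<otimes> r) = (t \<otimes> d) \<otimes> (a \<otimes> r)"
  proof -
    have "(t \<otimes> c) \<otimes> (b \<otimes> r) = (t \<otimes> (c \<otimes> b)) \<otimes> r" using tR cR u s by (simp add: m_assoc)
    also have "\<dots> = (t \<otimes> (d \<otimes> a)) \<otimes> r" by (simp only: te)
    also have "\<dots> = (t \<otimes> d) \<otimes> (a \<otimes> r)" using tR c a s by (simp add: m_assoc)
    finally show ?thesis .
  qed
  have n: "(t \<otimes> c) \<otimes> ((b \<otimes> r) \<oplus> (u \<otimes> r')) = ((t \<otimes> d) \<otimes> (a \<otimes> r)) \<oplus> (((t \<otimes> c) \<otimes> u) \<otimes> r')"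
  proof -
    have "(t \<otimes> c) \<otimes> ((b \<otimes> r) \<oplus> (u \<otimes> r')) = (t \<otimes> c) \<otimes> (b \<otimes> r) \<oplus> (t \<otimes> c) \<otimes> (u \<otimes> r')"
      using tR cR u uR s by (simp add: r_distr)
    also have "\<dots> = ((t \<otimes> d) \<otimes> (a \<otimes> r)) \<oplus> (t \<otimes> c) \<otimes> (u \<otimes> r')" by (simp only: n1)
    also have "\<dots> = ((t \<otimes> d) \<otimes> (a \<otimes> r)) \<oplus> (((t \<otimes> c) \<otimes> u) \<otimes> r')" using tR cR uR s by (simp add: m_assoc)
    finally show ?thesis .
  qed
  have dS: "(t \<otimes> c) \<otimes> (u \<otimes> s') = ((t \<otimes> c) \<otimes> u) \<otimes> s'" using tR cR uR by (simp add: m_assoc)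
  have "lfrac R S (((t \<otimes> c) \<otimes> u) \<otimes> s') (((t \<otimes> d) \<otimes> (a \<otimes> r)) \<oplus> (((t \<otimes> c) \<otimes> u) \<otimes> r'))
      = lfrac R S ((t \<otimes> c) \<otimes> (u \<otimes> s')) ((t \<otimes> c) \<otimes> ((b \<otimes> r) \<oplus> (u \<otimes> r')))"
    by (simp only: n dS)
  also have "\<dots> = lfrac R S (u \<otimes> s') ((b \<otimes> r) \<oplus> (u \<otimes> r'))"
    by (rule fr_exp) (use tR cR u uR s dS u2S S_mult in auto)
  finally show ?thesis using e2 u2S tR c by (meson m_closed)
qed

lemma A_exp2:
  assumes s: "s \<in> S" "s' \<in> S" "r \<in> carrier R" "r' \<in> carrier R"
    and u: "u \<in> S" "b \<in> carrier R" and e: "u \<otimes> s' = b \<otimes> s"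
    and a: "a \<in> carrier R" "a \<otimes> s' \<in> S"
  shows "\<exists>u2\<in>S. \<exists>b2\<in>carrier R. u2 \<otimes> (a \<otimes> s') = b2 \<otimes> s \<and>
     lfrac R S (u2 \<otimes> (a \<otimes> s')) ((b2 \<otimes> r) \<oplus> (u2 \<otimes> (a \<otimes> r'))) = lfrac R S (u \<otimes> s') ((b \<otimes> r) \<oplus> (u \<otimes> r'))"
proof -
  have uR: "u \<in> carrier R" "s \<in> carrier R" "s' \<in> carrier R" using u s by auto
  obtain u2 k where k: "u2 \<in> S" "k \<in> carrier R" and ke: "u2 \<otimes> a = k \<otimes> u" using ore[OF a(1) u(1)] by blast
  have u2R: "u2 \<in> carrier R" using k by simp
  have q: "u2 \<otimes> (a \<otimes> s') = k \<otimes> (u \<otimes> s')"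
  proof -
    have "u2 \<otimes> (a \<otimes> s') = (u2 \<otimes> a) \<otimes> s'" using u2R a uR by (simp add: m_assoc)
    also have "\<dots> = (k \<otimes> u) \<otimes> s'" by (simp only: ke)
    also have "\<dots> = k \<otimes> (u \<otimes> s')" using k uR by (simp add: m_assoc)
    finally show ?thesis .
  qed
  have e2: "u2 \<otimes> (a \<otimes> s') = (k \<otimes> b) \<otimes> s"
  proof -
    have "u2 \<otimes> (a \<otimes> s') = k \<otimes> (u \<otimes> s')" by (rule q)
    also have "\<dots> = k \<otimes> (b \<otimes> s)" by (simp only: e)
    also have "\<dots> = (k \<otimes> b) \<otimes> s" using k uR u by (simp add: m_assoc)
    finally show ?thesis .
  qed
  have qS: "k \<otimes> (u \<otimes> s') \<in> S" using q k a S_mult by (metis)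
  have n: "k \<otimes> ((b \<otimes> r) \<oplus> (u \<otimes> r')) = ((k \<otimes> b) \<otimes> r) \<oplus> (u2 \<otimes> (a \<otimes> r'))"
  proof -
    have "k \<otimes> ((b \<otimes> r) \<oplus> (u \<otimes> r')) = k \<otimes> (b \<otimes> r) \<oplus> k \<otimes> (u \<otimes> r')" using k u uR s by (simp add: r_distr)
    also have "\<dots> = ((k \<otimes> b) \<otimes> r) \<oplus> ((k \<otimes> u) \<otimes> r')" using k u uR s by (simp add: m_assoc)
    also have "\<dots> = ((k \<otimes> b) \<otimes> r) \<oplus> ((u2 \<otimes> a) \<otimes> r')" by (simp only: ke)
    also have "\<dots> = ((k \<otimes> b) \<otimes> r) \<oplus> (u2 \<otimes> (a \<otimes> r'))" using u2R a s by (simp add: m_assoc)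
    finally show ?thesis .
  qed
  have "lfrac R S (u2 \<otimes> (a \<otimes> s')) (((k \<otimes> b) \<otimes> r) \<oplus> (u2 \<otimes> (a \<otimes> r'))) = lfrac R S (k \<otimes> (u \<otimes> s')) (k \<otimes> ((b \<otimes> r) \<oplus> (u \<otimes> r')))"
    by (simp only: q n)
  also have "\<dots> = lfrac R S (u \<otimes> s') ((b \<otimes> r) \<oplus> (u \<otimes> r'))" by (rule fr_exp) (use k u uR s qS S_mult in auto)
  finally show ?thesis using e2 k u by blast
qed

lemma A_exp12:
  assumes s: "s \<in> S" "s' \<in> S" "r \<in> carrier R" "r' \<in> carrier R"
    and u: "u \<in> S" "b \<in> carrier R" and e: "u \<otimes> s' = b \<otimes> s"
    and a: "a \<in> carrier R" "a \<otimes> s \<in> S" and c: "c \<in> carrier R" "c \<otimes> s' \<in> S"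
  shows "\<exists>u3\<in>S. \<exists>b3\<in>carrier R. u3 \<otimes> (c \<otimes> s') = b3 \<otimes> (a \<otimes> s) \<and>
     lfrac R S (u3 \<otimes> (c \<otimes> s')) ((b3 \<otimes> (a \<otimes> r)) \<oplus> (u3 \<otimes> (c \<otimes> r'))) = lfrac R S (u \<otimes> s') ((b \<otimes> r) \<oplus> (u \<otimes> r'))"
proof -
  obtain u2 b2 where u2: "u2 \<in> S" "b2 \<in> carrier R" and e2: "u2 \<otimes> s' = b2 \<otimes> (a \<otimes> s)"
     and f2: "lfrac R S (u2 \<otimes> s') ((b2 \<otimes> (a \<otimes> r)) \<oplus> (u2 \<otimes> r')) = lfrac R S (u \<otimes> s') ((b \<otimes> r) \<oplus> (u \<otimes> r'))"
    using A_exp1[OF s u e a] by blast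
  have ar: "a \<otimes> r \<in> carrier R" using a s by simp
  obtain u3 b3 where u3: "u3 \<in> S" "b3 \<in> carrier R" and e3: "u3 \<otimes> (c \<otimes> s') = b3 \<otimes> (a \<otimes> s)"
     and f3: "lfrac R S (u3 \<otimes> (c \<otimes> s')) ((b3 \<otimes> (a \<otimes> r)) \<oplus> (u3 \<otimes> (c \<otimes> r'))) = lfrac R S (u2 \<otimes> s') ((b2 \<otimes> (a \<otimes> r)) \<oplus> (u2 \<otimes> r'))"
    using A_exp2[OF a(2) s(2) ar s(4) u2 e2 c] by blast
  show ?thesis using u3 e3 f3 f2 by metis
qed

lemma A_wd:
  assumes r1: "((s,r),(s1,r1)) \<in> loc_rel R S" and r2: "((s',r'),(s1',r1')) \<in> loc_rel R S"
    and u: "u \<in> S" "b \<in> carrier R" "u \<otimes> s' = b \<otimes> s"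
    and u1: "u1 \<in> S" "b1 \<in> carrier R" "u1 \<otimes> s1' = b1 \<otimes> s1"
  shows "lfrac R S (u \<otimes> s') ((b \<otimes> r) \<oplus> (u \<otimes> r')) = lfrac R S (u1 \<otimes> s1') ((b1 \<otimes> r1) \<oplus> (u1 \<otimes> r1'))"
proof -
  from r1 obtain a a1 where A: "s \<in> S" "r \<in> carrier R" "s1 \<in> S" "r1 \<in> carrier R"
    "a \<in> carrier R" "a1 \<in> carrier R" and Ae: "a \<otimes> s = a1 \<otimes> s1" "a \<otimes> s \<in> S" "a \<otimes> r = a1 \<otimes> r1"
    unfolding rel_iff by blast
  from r2 obtain c c1 where C: "s' \<in> S" "r' \<in> carrier R" "s1' \<in> S" "r1' \<in> carrier R"
    "c \<in> carrier R" "c1 \<in> carrier R" and Ce: "c \<otimes> s' = c1 \<otimes> s1'" "c \<otimes> s' \<in> S" "c \<otimes> r' = c1 \<otimes> r1'"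
    unfolding rel_iff by blast
  have Ae2: "a1 \<otimes> s1 \<in> S" using Ae by simp
  have Ce2: "c1 \<otimes> s1' \<in> S" using Ce by simp
  obtain u3 b3 where u3: "u3 \<in> S" "b3 \<in> carrier R" and e3: "u3 \<otimes> (c \<otimes> s') = b3 \<otimes> (a \<otimes> s)"
     and f3: "lfrac R S (u3 \<otimes> (c \<otimes> s')) ((b3 \<otimes> (a \<otimes> r)) \<oplus> (u3 \<otimes> (c \<otimes> r'))) = lfrac R S (u \<otimes> s') ((b \<otimes> r) \<oplus> (u \<otimes> r'))"
    using A_exp12[OF A(1) C(1) A(2) C(2) u A(5) Ae(2) C(5) Ce(2)] by blast
  obtain u4 b4 where u4: "u4 \<in> S" "b4 \<in> carrier R" and e4: "u4 \<otimes> (c1 \<otimes> s1') = b4 \<otimes> (a1 \<otimes> s1)"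
     and f4: "lfrac R S (u4 \<otimes> (c1 \<otimes> s1')) ((b4 \<otimes> (a1 \<otimes> r1)) \<oplus> (u4 \<otimes> (c1 \<otimes> r1'))) = lfrac R S (u1 \<otimes> s1') ((b1 \<otimes> r1) \<oplus> (u1 \<otimes> r1'))"
    using A_exp12[OF A(3) C(3) A(4) C(4) u1 A(6) Ae2 C(6) Ce2] by blast
  have e3': "u3 \<otimes> (c1 \<otimes> s1') = b3 \<otimes> (a1 \<otimes> s1)" using e3 by (simp only: Ae Ce)
  have "lfrac R S (u3 \<otimes> (c1 \<otimes> s1')) ((b3 \<otimes> (a1 \<otimes> r1)) \<oplus> (u3 \<otimes> (c1 \<otimes> r1'))) = lfrac R S (u4 \<otimes> (c1 \<otimes> s1')) ((b4 \<otimes> (a1 \<otimes> r1)) \<oplus> (u4 \<otimes> (c1 \<otimes> r1')))"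
    by (rule A_choice[OF Ae2 Ce2 _ _ u3(1) u4(1) u3(2) u4(2) e3' e4]) (use A C in auto)
  thus ?thesis using f3 f4 by (simp only: Ae Ce)
qed

lemma add_char:
  assumes s: "s \<in> S" "r \<in> carrier R" "s' \<in> S" "r' \<in> carrier R"
    and u: "u \<in> S" "b \<in> carrier R" "u \<otimes> s' = b \<otimes> s"
  shows "loc_add R S (lfrac R S s r) (lfrac R S s' r') = lfrac R S (u \<otimes> s') ((b \<otimes> r) \<oplus> (u \<otimes> r'))"
proof -
  let ?M = "{Z. \<exists>s1 r1 s1' r1' u1 b1. Z = lfrac R S (u1 \<otimes> s1') ((b1 \<otimes> r1) \<oplus> (u1 \<otimes> r1')) \<and> (s1, r1) \<in> lfrac R S s r \<and>
      (s1', r1') \<in> lfrac R S s' r' \<and> u1 \<in> S \<and> b1 \<in> carrier R \<and> u1 \<otimes> s1' = b1 \<otimes> s1}"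
  have "\<Union>?M = lfrac R S (u \<otimes> s') ((b \<otimes> r) \<oplus> (u \<otimes> r'))"
  proof (rule equalityI)
    show "\<Union>?M \<subseteq> lfrac R S (u \<otimes> s') ((b \<otimes> r) \<oplus> (u \<otimes> r'))"
    proof (rule Union_least)
      fix Z assume "Z \<in> ?M"
      then obtain s1 r1 s1' r1' u1 b1 where Z: "Z = lfrac R S (u1 \<otimes> s1') ((b1 \<otimes> r1) \<oplus> (u1 \<otimes> r1'))"
        and m: "((s,r),(s1, r1)) \<in> loc_rel R S" "((s',r'),(s1', r1')) \<in> loc_rel R S"
        and uu: "u1 \<in> S" "b1 \<in> carrier R" "u1 \<otimes> s1' = b1 \<otimes> s1"
        unfolding mem_fr by blast
      show "Z \<subseteq> lfrac R S (u \<otimes> s') ((b \<otimes> r) \<oplus> (u \<otimes> r'))" using A_wd[OF m u uu] Z by simp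
    qed
    show "lfrac R S (u \<otimes> s') ((b \<otimes> r) \<oplus> (u \<otimes> r')) \<subseteq> \<Union>?M"
      using fr_self[OF s(1,2)] fr_self[OF s(3,4)] u by blast
  qed
  thus ?thesis unfolding loc_add_def by simp
qed

end

context lden begin

lemma L_carrier: "carrier (left_localization R S) = (S \<times> carrier R) // loc_rel R S"
  unfolding left_localization_def by simp
lemma L_mult: "x \<otimes>\<^bsub>left_localization R S\<^esub> y = loc_mult R S x y"
  unfolding left_localization_def by simp
lemma L_add: "x \<oplus>\<^bsub>left_localization R S\<^esub> y = loc_add R S x y"
  unfolding left_localization_def by simp

lemma fr_exp': "a \<in> carrier R \<Longrightarrow> s \<in> S \<Longrightarrow> r \<in> carrier R \<Longrightarrow> a \<otimes> s \<in> S \<Longrightarrow> x = a \<otimes> s \<Longrightarrow> y = a \<otimes> r \<Longrightarrow>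
  lfrac R S s r = lfrac R S x y"
  using fr_exp by simp

lemma zero_fr: assumes "s \<in> S" "s' \<in> S" shows "lfrac R S s' \<zero> = lfrac R S s \<zero>"
proof -
  obtain u b where u: "u \<in> S" "b \<in> carrier R" "u \<otimes> s' = b \<otimes> s" using common2[OF assms(2,1)] by blast
  have us: "u \<otimes> s' \<in> S" using u(1) assms S_mult by simp
  hence bs: "b \<otimes> s \<in> S" using u(3) by simp
  have "lfrac R S s' \<zero> = lfrac R S (u \<otimes> s') \<zero>" by (rule fr_exp'[where a=u]) (use u(1) assms us in auto)
  also have "\<dots> = lfrac R S (b \<otimes> s) \<zero>" by (simp only: u(3))
  also have "\<dots> = lfrac R S s \<zero>" by (rule fr_exp'[where a=b, symmetric]) (use u(2) assms bs in auto)
  finally show ?thesis .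
qed

lemma one_fr: assumes "s \<in> S" "s' \<in> S" shows "lfrac R S s' s' = lfrac R S s s"
proof -
  obtain u b where u: "u \<in> S" "b \<in> carrier R" "u \<otimes> s' = b \<otimes> s" using common2[OF assms(2,1)] by blast
  have us: "u \<otimes> s' \<in> S" using u(1) assms S_mult by simp
  hence bs: "b \<otimes> s \<in> S" using u(3) by simp
  have "lfrac R S s' s' = lfrac R S (u \<otimes> s') (u \<otimes> s')" by (rule fr_exp'[where a=u]) (use u(1) assms us in auto)
  also have "\<dots> = lfrac R S (b \<otimes> s) (b \<otimes> s)" by (simp only: u(3))
  also have "\<dots> = lfrac R S s s" by (rule fr_exp'[where a=b, symmetric]) (use u(2) assms bs in auto)
  finally show ?thesis .
qed

lemma L_zero: assumes "s \<in> S" shows "\<zero>\<^bsub>left_localization R S\<^esub> = lfrac R S s \<zero>"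
proof -
  have "{Z. \<exists>s'\<in>S. Z = lfrac R S s' \<zero>} = {lfrac R S s \<zero>}"
  proof
    show "{Z. \<exists>s'\<in>S. Z = lfrac R S s' \<zero>} \<subseteq> {lfrac R S s \<zero>}"
    proof
      fix Z assume "Z \<in> {Z. \<exists>s'\<in>S. Z = lfrac R S s' \<zero>}"
      then obtain s' where "s' \<in> S" "Z = lfrac R S s' \<zero>" by blast
      thus "Z \<in> {lfrac R S s \<zero>}" using zero_fr[OF assms] by simp
    qed
    show "{lfrac R S s \<zero>} \<subseteq> {Z. \<exists>s'\<in>S. Z = lfrac R S s' \<zero>}" using assms by blast
  qed
  thus ?thesis unfolding left_localization_def by simp
qed

lemma L_one: assumes "s \<in> S" shows "\<one>\<^bsub>left_localization R S\<^esub> = lfrac R S s s"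
proof -
  have "{Z. \<exists>s'\<in>S. Z = lfrac R S s' s'} = {lfrac R S s s}"
  proof
    show "{Z. \<exists>s'\<in>S. Z = lfrac R S s' s'} \<subseteq> {lfrac R S s s}"
    proof
      fix Z assume "Z \<in> {Z. \<exists>s'\<in>S. Z = lfrac R S s' s'}"
      then obtain s' where "s' \<in> S" "Z = lfrac R S s' s'" by blast
      thus "Z \<in> {lfrac R S s s}" using one_fr[OF assms] by simp
    qed
    show "{lfrac R S s s} \<subseteq> {Z. \<exists>s'\<in>S. Z = lfrac R S s' s'}" using assms by blast
  qed
  thus ?thesis unfolding left_localization_def by simp
qed

lemma someS: obtains w where "w \<in> S" using S_ne by blast

lemma add_same: assumes "d \<in> S" "x \<in> carrier R" "y \<in> carrier R"
  shows "loc_add R S (lfrac R S d x) (lfrac R S d y) = lfrac R S d (x \<oplus> y)"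
proof -
  obtain w where w: "w \<in> S" using someS by blast
  have "loc_add R S (lfrac R S d x) (lfrac R S d y) = lfrac R S (w \<otimes> d) ((w \<otimes> x) \<oplus> (w \<otimes> y))"
    by (rule add_char) (use assms w in auto)
  also have "\<dots> = lfrac R S d (x \<oplus> y)"
    by (rule fr_exp'[where a=w, symmetric]) (use assms w S_mult in \<open>auto simp: r_distr\<close>)
  finally show ?thesis .
qed

lemma mult_simple: assumes "s \<in> S" "b \<in> carrier R" "s' \<in> S" "r' \<in> carrier R"
  shows "loc_mult R S (lfrac R S s (b \<otimes> s')) (lfrac R S s' r') = lfrac R S s (b \<otimes> r')"
proof -
  obtain w where w: "w \<in> S" using someS by blast
  have wR: "w \<in> carrier R" using w by simp
  have "loc_mult R S (lfrac R S s (b \<otimes> s')) (lfrac R S s' r') = lfrac R S (w \<otimes> s) ((w \<otimes> b) \<otimes> r')"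
    by (rule mult_char) (use assms w wR in \<open>auto simp: m_assoc\<close>)
  also have "\<dots> = lfrac R S s (b \<otimes> r')"
    by (rule fr_exp'[where a=w, symmetric]) (use assms w wR S_mult in \<open>auto simp: m_assoc\<close>)
  finally show ?thesis .
qed

lemma reexp: assumes "s \<in> S" "r \<in> carrier R" "s' \<in> S"
  shows "\<exists>s1\<in>S. \<exists>b\<in>carrier R. lfrac R S s r = lfrac R S s1 (b \<otimes> s')"
proof -
  obtain u b where u: "u \<in> S" "b \<in> carrier R" "u \<otimes> r = b \<otimes> s'" using ore[OF assms(2,3)] by blast
  have "lfrac R S s r = lfrac R S (u \<otimes> s) (u \<otimes> r)" by (rule fr_exp'[where a=u]) (use u(1,2) assms S_mult in auto)
  also have "\<dots> = lfrac R S (u \<otimes> s) (b \<otimes> s')" by (simp only: u(3))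
  moreover have "u \<otimes> s \<in> S" using u(1) assms S_mult by simp
  ultimately show ?thesis using u(2) by blast
qed

lemma common2f: assumes "s \<in> S" "r \<in> carrier R" "s' \<in> S" "r' \<in> carrier R"
  shows "\<exists>d\<in>S. \<exists>x\<in>carrier R. \<exists>y\<in>carrier R. lfrac R S s r = lfrac R S d x \<and> lfrac R S s' r' = lfrac R S d y"
proof -
  obtain u b where u: "u \<in> S" "b \<in> carrier R" "u \<otimes> s = b \<otimes> s'" using common2[OF assms(1,3)] by blast
  have us: "u \<otimes> s \<in> S" using u(1) assms S_mult by simp
  hence bs: "b \<otimes> s' \<in> S" using u(3) by simp
  have 1: "lfrac R S s r = lfrac R S (u \<otimes> s) (u \<otimes> r)" by (rule fr_exp'[where a=u]) (use u(1) us assms in auto)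
  have "lfrac R S s' r' = lfrac R S (b \<otimes> s') (b \<otimes> r')" by (rule fr_exp'[where a=b]) (use u(2) bs assms in auto)
  hence 2: "lfrac R S s' r' = lfrac R S (u \<otimes> s) (b \<otimes> r')" by (simp only: u(3))
  have m: "u \<otimes> r \<in> carrier R" "b \<otimes> r' \<in> carrier R" using u(1,2) assms by auto
  show ?thesis using 1 2 us m by (intro bexI[of _ "u \<otimes> s"] bexI[of _ "u \<otimes> r"] bexI[of _ "b \<otimes> r'"] conjI)
qed

lemma common3: assumes "s1 \<in> S" "r1 \<in> carrier R" "s2 \<in> S" "r2 \<in> carrier R" "s3 \<in> S" "r3 \<in> carrier R"
  shows "\<exists>d\<in>S. \<exists>x1\<in>carrier R. \<exists>x2\<in>carrier R. \<exists>x3\<in>carrier R. lfrac R S s1 r1 = lfrac R S d x1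
     \<and> lfrac R S s2 r2 = lfrac R S d x2 \<and> lfrac R S s3 r3 = lfrac R S d x3"
proof -
  obtain d x1 x2 where d: "d \<in> S" "x1 \<in> carrier R" "x2 \<in> carrier R" "lfrac R S s1 r1 = lfrac R S d x1"
     "lfrac R S s2 r2 = lfrac R S d x2" using common2f[OF assms(1-4)] by blast
  obtain u b where u: "u \<in> S" "b \<in> carrier R" "u \<otimes> d = b \<otimes> s3" using common2[OF d(1) assms(5)] by blast
  have ud: "u \<otimes> d \<in> S" using u(1) d(1) S_mult by simp
  hence bs: "b \<otimes> s3 \<in> S" using u(3) by simp
  have e: "lfrac R S d x = lfrac R S (u \<otimes> d) (u \<otimes> x)" if "x \<in> carrier R" for x
    by (rule fr_exp'[where a=u]) (use u(1) ud d(1) that in auto)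
  have "lfrac R S s3 r3 = lfrac R S (b \<otimes> s3) (b \<otimes> r3)" by (rule fr_exp'[where a=b]) (use u(2) bs assms in auto)
  hence 3: "lfrac R S s3 r3 = lfrac R S (u \<otimes> d) (b \<otimes> r3)" by (simp only: u(3))
  have m: "u \<otimes> x1 \<in> carrier R" "u \<otimes> x2 \<in> carrier R" "b \<otimes> r3 \<in> carrier R" using u(1,2) d assms by auto
  have "lfrac R S s1 r1 = lfrac R S (u \<otimes> d) (u \<otimes> x1)" using e[OF d(2)] d(4) by simp
  moreover have "lfrac R S s2 r2 = lfrac R S (u \<otimes> d) (u \<otimes> x2)" using e[OF d(3)] d(5) by simp
  ultimately show ?thesis using 3 ud m by (intro bexI[of _ "u \<otimes> d"] bexI[of _ "u \<otimes> x1"] bexI[of _ "u \<otimes> x2"] bexI[of _ "b \<otimes> r3"] conjI)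
qed

lemma reexp2: assumes "d \<in> S" "y \<in> carrier R" "z \<in> carrier R" "s \<in> S"
  shows "\<exists>D\<in>S. \<exists>c1\<in>carrier R. \<exists>c2\<in>carrier R. lfrac R S d y = lfrac R S D (c1 \<otimes> s) \<and> lfrac R S d z = lfrac R S D (c2 \<otimes> s)"
proof -
  obtain u1 c1 where u1: "u1 \<in> S" "c1 \<in> carrier R" "u1 \<otimes> y = c1 \<otimes> s" using ore[OF assms(2,4)] by blast
  have u1z: "u1 \<otimes> z \<in> carrier R" using u1 assms by simp
  obtain u2 c2 where u2: "u2 \<in> S" "c2 \<in> carrier R" "u2 \<otimes> (u1 \<otimes> z) = c2 \<otimes> s" using ore[OF u1z assms(4)] by blast
  have DS: "u2 \<otimes> (u1 \<otimes> d) \<in> S" using u1 u2 assms S_mult by simp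
  have "lfrac R S d y = lfrac R S (u1 \<otimes> d) (u1 \<otimes> y)" by (rule fr_exp'[where a=u1]) (use u1(1,2) assms S_mult in auto)
  also have "\<dots> = lfrac R S (u1 \<otimes> d) (c1 \<otimes> s)" by (simp only: u1(3))
  also have "\<dots> = lfrac R S (u2 \<otimes> (u1 \<otimes> d)) ((u2 \<otimes> c1) \<otimes> s)"
    by (rule fr_exp'[where a=u2]) (use u1(1,2) u2(1,2) assms S_mult DS in \<open>auto simp: m_assoc\<close>)
  finally have 1: "lfrac R S d y = lfrac R S (u2 \<otimes> (u1 \<otimes> d)) ((u2 \<otimes> c1) \<otimes> s)" .
  have "lfrac R S d z = lfrac R S (u1 \<otimes> d) (u1 \<otimes> z)" by (rule fr_exp'[where a=u1]) (use u1(1,2) assms S_mult in auto)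
  also have "\<dots> = lfrac R S (u2 \<otimes> (u1 \<otimes> d)) (u2 \<otimes> (u1 \<otimes> z))"
    by (rule fr_exp'[where a=u2]) (use u1(1,2) u2(1,2) assms S_mult DS in auto)
  also have "\<dots> = lfrac R S (u2 \<otimes> (u1 \<otimes> d)) (c2 \<otimes> s)" by (simp only: u2(3))
  finally have 2: "lfrac R S d z = lfrac R S (u2 \<otimes> (u1 \<otimes> d)) (c2 \<otimes> s)" .
  have m: "u2 \<otimes> c1 \<in> carrier R" using u1(2) u2(1) by simp
  show ?thesis using 1 2 DS m u2(2) by (intro bexI[of _ "u2 \<otimes> (u1 \<otimes> d)"] bexI[of _ "u2 \<otimes> c1"] bexI[of _ c2] conjI)
qed

end

context lden begin

abbreviation "Q \<equiv> (S \<times> carrier R) // loc_rel R S"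

lemma Q_fr: "A \<in> Q \<Longrightarrow> \<exists>s\<in>S. \<exists>r\<in>carrier R. A = lfrac R S s r"
  by (erule carrier_fr) blast

lemma Q2: assumes "A \<in> Q" "B \<in> Q"
  shows "\<exists>d\<in>S. \<exists>x\<in>carrier R. \<exists>y\<in>carrier R. A = lfrac R S d x \<and> B = lfrac R S d y"
proof -
  obtain s r s' r' where a: "s \<in> S" "r \<in> carrier R" "A = lfrac R S s r" "s' \<in> S" "r' \<in> carrier R" "B = lfrac R S s' r'"
    using Q_fr[OF assms(1)] Q_fr[OF assms(2)] by blast
  obtain d x y where d: "d \<in> S" "x \<in> carrier R" "y \<in> carrier R" "lfrac R S s r = lfrac R S d x" "lfrac R S s' r' = lfrac R S d y"
    using common2f[OF a(1,2,4,5)] by blast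
  have "A = lfrac R S d x" "B = lfrac R S d y" using a(3,6) d(4,5) by simp_all
  thus ?thesis using d(1-3) by blast
qed

lemma Q3: assumes "A \<in> Q" "B \<in> Q" "C \<in> Q"
  shows "\<exists>d\<in>S. \<exists>x\<in>carrier R. \<exists>y\<in>carrier R. \<exists>z\<in>carrier R. A = lfrac R S d x \<and> B = lfrac R S d y \<and> C = lfrac R S d z"
proof -
  obtain s r s' r' s'' r'' where a: "s \<in> S" "r \<in> carrier R" "A = lfrac R S s r" "s' \<in> S" "r' \<in> carrier R" "B = lfrac R S s' r'"
     "s'' \<in> S" "r'' \<in> carrier R" "C = lfrac R S s'' r''"
    using Q_fr[OF assms(1)] Q_fr[OF assms(2)] Q_fr[OF assms(3)] by blast
  obtain d x y z where d: "d \<in> S" "x \<in> carrier R" "y \<in> carrier R" "z \<in> carrier R" "lfrac R S s r = lfrac R S d x"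
     "lfrac R S s' r' = lfrac R S d y" "lfrac R S s'' r'' = lfrac R S d z"
    using common3[OF a(1,2,4,5,7,8)] by blast
  have "A = lfrac R S d x" "B = lfrac R S d y" "C = lfrac R S d z" using a(3,6,9) d(5-7) by simp_all
  thus ?thesis using d(1-4) by blast
qed

lemma Q_mult_closed: assumes "A \<in> Q" "B \<in> Q" shows "loc_mult R S A B \<in> Q"
proof -
  obtain s r s' r' where a: "s \<in> S" "r \<in> carrier R" "A = lfrac R S s r" "s' \<in> S" "r' \<in> carrier R" "B = lfrac R S s' r'"
    using Q_fr[OF assms(1)] Q_fr[OF assms(2)] by blast
  obtain u b where u: "u \<in> S" "b \<in> carrier R" "u \<otimes> r = b \<otimes> s'" using ore[OF a(2,4)] by blast
  have "loc_mult R S A B = lfrac R S (u \<otimes> s) (b \<otimes> r')" using mult_char[OF a(1,2,4,5) u] a(3,6) by simp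
  moreover have "lfrac R S (u \<otimes> s) (b \<otimes> r') \<in> Q" by (rule fr_in_carrier) (use u(1,2) a S_mult in auto)
  ultimately show ?thesis by simp
qed

lemma Q_add_closed: assumes "A \<in> Q" "B \<in> Q" shows "loc_add R S A B \<in> Q"
proof -
  obtain d x y where d: "d \<in> S" "x \<in> carrier R" "y \<in> carrier R" "A = lfrac R S d x" "B = lfrac R S d y"
    using Q2[OF assms] by blast
  have "loc_add R S A B = lfrac R S d (x \<oplus> y)" using add_same[OF d(1-3)] d(4,5) by simp
  moreover have "lfrac R S d (x \<oplus> y) \<in> Q" by (rule fr_in_carrier) (use d in auto)
  ultimately show ?thesis by simp
qed

lemma Q_add_assoc: assumes "A \<in> Q" "B \<in> Q" "C \<in> Q"
  shows "loc_add R S (loc_add R S A B) C = loc_add R S A (loc_add R S B C)"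
proof -
  obtain d x y z where d: "d \<in> S" "x \<in> carrier R" "y \<in> carrier R" "z \<in> carrier R"
    "A = lfrac R S d x" "B = lfrac R S d y" "C = lfrac R S d z" using Q3[OF assms] by blast
  have "loc_add R S (loc_add R S A B) C = lfrac R S d ((x \<oplus> y) \<oplus> z)"
    using d by (simp add: add_same)
  also have "\<dots> = lfrac R S d (x \<oplus> (y \<oplus> z))" using d by (simp add: a_assoc)
  also have "\<dots> = loc_add R S A (loc_add R S B C)" using d by (simp add: add_same)
  finally show ?thesis .
qed

lemma Q_add_comm: assumes "A \<in> Q" "B \<in> Q"
  shows "loc_add R S A B = loc_add R S B A"
proof -
  obtain d x y where d: "d \<in> S" "x \<in> carrier R" "y \<in> carrier R" "A = lfrac R S d x" "B = lfrac R S d y"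
    using Q2[OF assms] by blast
  show ?thesis using d by (simp add: add_same a_comm)
qed

lemma Q_l_zero: assumes "A \<in> Q" shows "loc_add R S (\<zero>\<^bsub>left_localization R S\<^esub>) A = A"
proof -
  obtain s r where a: "s \<in> S" "r \<in> carrier R" "A = lfrac R S s r" using Q_fr[OF assms] by blast
  show ?thesis using a L_zero[OF a(1)] add_same[OF a(1) zero_closed a(2)] by simp
qed

lemma Q_l_inv: assumes "A \<in> Q" shows "\<exists>B\<in>Q. loc_add R S B A = \<zero>\<^bsub>left_localization R S\<^esub>"
proof -
  obtain s r where a: "s \<in> S" "r \<in> carrier R" "A = lfrac R S s r" using Q_fr[OF assms] by blast
  have "loc_add R S (lfrac R S s (\<ominus> r)) A = lfrac R S s \<zero>" using a add_same[OF a(1) _ a(2), of "\<ominus> r"]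
    by (simp add: l_neg)
  moreover have "lfrac R S s (\<ominus> r) \<in> Q" by (rule fr_in_carrier) (use a in auto)
  ultimately show ?thesis using L_zero[OF a(1)] by auto
qed

lemma Q_mult_assoc: assumes "A \<in> Q" "B \<in> Q" "C \<in> Q"
  shows "loc_mult R S (loc_mult R S A B) C = loc_mult R S A (loc_mult R S B C)"
proof -
  obtain s1 r1 s2 r2 s3 r3 where a: "s1 \<in> S" "r1 \<in> carrier R" "A = lfrac R S s1 r1" "s2 \<in> S" "r2 \<in> carrier R" "B = lfrac R S s2 r2"
     "s3 \<in> S" "r3 \<in> carrier R" "C = lfrac R S s3 r3"
    using Q_fr[OF assms(1)] Q_fr[OF assms(2)] Q_fr[OF assms(3)] by blast
  obtain s2' b2 where b2: "s2' \<in> S" "b2 \<in> carrier R" "B = lfrac R S s2' (b2 \<otimes> s3)"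
    using reexp[OF a(4,5,7)] a(6) by auto
  obtain s1' b1 where b1: "s1' \<in> S" "b1 \<in> carrier R" "A = lfrac R S s1' (b1 \<otimes> s2')"
    using reexp[OF a(1,2) b2(1)] a(3) by auto
  have s3R: "s3 \<in> carrier R" using a by simp
  have AB: "loc_mult R S A B = lfrac R S s1' ((b1 \<otimes> b2) \<otimes> s3)"
    using b1 b2 mult_simple[OF b1(1,2) b2(1), of "b2 \<otimes> s3"] s3R by (simp add: m_assoc)
  have "loc_mult R S (loc_mult R S A B) C = lfrac R S s1' ((b1 \<otimes> b2) \<otimes> r3)"
    unfolding AB a(9) by (rule mult_simple) (use b1 b2 a in auto)
  also have "\<dots> = lfrac R S s1' (b1 \<otimes> (b2 \<otimes> r3))" using b1 b2 a by (simp add: m_assoc)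
  also have "\<dots> = loc_mult R S A (lfrac R S s2' (b2 \<otimes> r3))"
    unfolding b1(3) by (rule mult_simple[symmetric]) (use b1 b2 a in auto)
  also have "lfrac R S s2' (b2 \<otimes> r3) = loc_mult R S B C"
    unfolding b2(3) a(9) by (rule mult_simple[symmetric]) (use b1 b2 a in auto)
  finally show ?thesis .
qed

lemma Q_l_one: assumes "A \<in> Q" shows "loc_mult R S (\<one>\<^bsub>left_localization R S\<^esub>) A = A"
proof -
  obtain s r where a: "s \<in> S" "r \<in> carrier R" "A = lfrac R S s r" using Q_fr[OF assms] by blast
  have sR: "s \<in> carrier R" using a by simp
  have "loc_mult R S (lfrac R S s (\<one> \<otimes> s)) (lfrac R S s r) = lfrac R S s (\<one> \<otimes> r)"
    by (rule mult_simple) (use a in auto)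
  thus ?thesis using a sR L_one[OF a(1)] by simp
qed

lemma Q_r_one: assumes "A \<in> Q" shows "loc_mult R S A (\<one>\<^bsub>left_localization R S\<^esub>) = A"
proof -
  obtain s r where a: "s \<in> S" "r \<in> carrier R" "A = lfrac R S s r" using Q_fr[OF assms] by blast
  obtain w where w: "w \<in> S" using someS by blast
  obtain s1 b where b: "s1 \<in> S" "b \<in> carrier R" "A = lfrac R S s1 (b \<otimes> w)"
    using reexp[OF a(1,2) w] a(3) by auto
  have "loc_mult R S (lfrac R S s1 (b \<otimes> w)) (lfrac R S w w) = lfrac R S s1 (b \<otimes> w)"
    by (rule mult_simple) (use b w in auto)
  thus ?thesis using b L_one[OF w] by simp
qed

lemma Q_l_distr: assumes "A \<in> Q" "B \<in> Q" "C \<in> Q"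
  shows "loc_mult R S (loc_add R S A B) C = loc_add R S (loc_mult R S A C) (loc_mult R S B C)"
proof -
  obtain d x y where d: "d \<in> S" "x \<in> carrier R" "y \<in> carrier R" "A = lfrac R S d x" "B = lfrac R S d y"
    using Q2[OF assms(1,2)] by blast
  obtain s r where c: "s \<in> S" "r \<in> carrier R" "C = lfrac R S s r" using Q_fr[OF assms(3)] by blast
  obtain D c1 c2 where D: "D \<in> S" "c1 \<in> carrier R" "c2 \<in> carrier R" "lfrac R S d x = lfrac R S D (c1 \<otimes> s)"
    "lfrac R S d y = lfrac R S D (c2 \<otimes> s)" using reexp2[OF d(1-3) c(1)] by blast
  have sR: "s \<in> carrier R" using c by simp
  have AB: "loc_add R S A B = lfrac R S D ((c1 \<oplus> c2) \<otimes> s)"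
    using d(4,5) D add_same[OF D(1), of "c1 \<otimes> s" "c2 \<otimes> s"] sR by (simp add: l_distr)
  have "loc_mult R S (loc_add R S A B) C = lfrac R S D ((c1 \<oplus> c2) \<otimes> r)"
    unfolding AB c(3) by (rule mult_simple) (use D c in auto)
  also have "\<dots> = loc_add R S (lfrac R S D (c1 \<otimes> r)) (lfrac R S D (c2 \<otimes> r))"
    using add_same[OF D(1), of "c1 \<otimes> r" "c2 \<otimes> r"] D c by (simp add: l_distr)
  also have "lfrac R S D (c1 \<otimes> r) = loc_mult R S A C"
    using mult_simple[OF D(1,2) c(1,2)] d(4) D(4) c(3) by simp
  also have "lfrac R S D (c2 \<otimes> r) = loc_mult R S B C"
    using mult_simple[OF D(1,3) c(1,2)] d(5) D(5) c(3) by simp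
  finally show ?thesis .
qed

lemma Q_r_distr: assumes "A \<in> Q" "B \<in> Q" "C \<in> Q"
  shows "loc_mult R S C (loc_add R S A B) = loc_add R S (loc_mult R S C A) (loc_mult R S C B)"
proof -
  obtain d x y where d: "d \<in> S" "x \<in> carrier R" "y \<in> carrier R" "A = lfrac R S d x" "B = lfrac R S d y"
    using Q2[OF assms(1,2)] by blast
  obtain s r where c: "s \<in> S" "r \<in> carrier R" "C = lfrac R S s r" using Q_fr[OF assms(3)] by blast
  obtain s1 b where b: "s1 \<in> S" "b \<in> carrier R" "C = lfrac R S s1 (b \<otimes> d)"
    using reexp[OF c(1,2) d(1)] c(3) by auto
  have AB: "loc_add R S A B = lfrac R S d (x \<oplus> y)" using add_same[OF d(1-3)] d(4,5) by simp
  have "loc_mult R S C (loc_add R S A B) = lfrac R S s1 (b \<otimes> (x \<oplus> y))"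
    unfolding AB b(3) by (rule mult_simple) (use b d in auto)
  also have "\<dots> = loc_add R S (lfrac R S s1 (b \<otimes> x)) (lfrac R S s1 (b \<otimes> y))"
    using add_same[OF b(1), of "b \<otimes> x" "b \<otimes> y"] b d by (simp add: r_distr)
  also have "lfrac R S s1 (b \<otimes> x) = loc_mult R S C A"
    using mult_simple[OF b(1,2) d(1,2)] d(4) b(3) by simp
  also have "lfrac R S s1 (b \<otimes> y) = loc_mult R S C B"
    using mult_simple[OF b(1,2) d(1,3)] d(5) b(3) by simp
  finally show ?thesis .
qed

lemma L_ring: "ring (left_localization R S)"
proof -
  obtain w where w: "w \<in> S" using someS by blast
  have z: "\<zero>\<^bsub>left_localization R S\<^esub> \<in> Q" using L_zero[OF w] fr_in_carrier[OF w zero_closed] by simp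
  have o: "\<one>\<^bsub>left_localization R S\<^esub> \<in> Q" using L_one[OF w] fr_in_carrier[OF w] w by simp
  show ?thesis
  proof (rule ringI)
    show "abelian_group (left_localization R S)"
      by (rule abelian_groupI) (simp_all only: L_carrier L_add,
          (fact Q_add_closed z Q_add_assoc Q_add_comm Q_l_zero Q_l_inv)+)
    show "monoid (left_localization R S)"
      by (rule monoidI) (simp_all only: L_carrier L_mult,
          (fact Q_mult_closed o Q_mult_assoc Q_l_one Q_r_one)+)
  qed (simp_all only: L_carrier L_mult L_add, (fact Q_l_distr Q_r_distr)+)
qed

end


lemma lden_of_no1: "ring R \<Longrightarrow> left_denominator_set_no1 R S \<Longrightarrow> lden R S"
  unfolding left_denominator_set_no1_def mult_closed_nz_def left_Ore_cond_def left_denom_cond_def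
  by (intro lden.intro lden_axioms.intro) (auto)

lemma no1_of_den: "left_denominator_set R S \<Longrightarrow> left_denominator_set_no1 R S"
  unfolding left_denominator_set_no1_def left_denominator_set_def left_Ore_set_def multiplicative_set_def
  by blast

context
  fixes R :: "('a, 'b) ring_scheme" (structure) and S :: "'a set"
  assumes RR: "ring R" and LD: "left_denominator_set R S" and I: "ideal (ass R S) R"
begin

interpretation ring R by (rule RR)

lemma lS: "lden R S" by (rule lden_of_no1[OF RR no1_of_den[OF LD]])

interpretation S: lden R S by (rule lS)

lemma oneS: "\<one> \<in> S" using LD unfolding left_denominator_set_def left_Ore_set_def multiplicative_set_def by blast
lemma zeroS: "\<zero> \<notin> S" using LD unfolding left_denominator_set_def left_Ore_set_def multiplicative_set_def mult_closed_nz_def by blast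

lemma core_sub: "core R S \<subseteq> S" unfolding core_def by blast

lemma core_iff: "c \<in> core R S \<longleftrightarrow> c \<in> S \<and> (\<forall>a\<in>carrier R. c \<otimes> a = \<zero> \<longleftrightarrow> a \<in> ass R S)"
  unfolding core_def left_ker_def ass_def by auto

lemma ass_iff: "a \<in> ass R S \<longleftrightarrow> a \<in> carrier R \<and> (\<exists>s\<in>S. s \<otimes> a = \<zero>)"
  unfolding ass_def by simp

lemma core_left: assumes "x \<in> S" "c \<in> core R S" shows "x \<otimes> c \<in> core R S"
proof -
  have c: "c \<in> S" "\<And>a. a \<in> carrier R \<Longrightarrow> c \<otimes> a = \<zero> \<longleftrightarrow> a \<in> ass R S" using assms(2) core_iff by auto
  have xc: "x \<otimes> c \<in> S" using S.S_mult assms(1) c(1) by simp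
  have "x \<otimes> c \<otimes> a = \<zero> \<longleftrightarrow> a \<in> ass R S" if a: "a \<in> carrier R" for a
  proof
    assume "x \<otimes> c \<otimes> a = \<zero>" thus "a \<in> ass R S" using xc a unfolding ass_iff by blast
  next
    assume "a \<in> ass R S" hence "c \<otimes> a = \<zero>" using c(2) a by simp
    hence "x \<otimes> (c \<otimes> a) = \<zero>" using assms(1) by simp
    thus "x \<otimes> c \<otimes> a = \<zero>" using assms(1) c(1) a by (simp add: m_assoc)
  qed
  thus ?thesis using xc core_iff by blast
qed

lemma core_right: assumes "x \<in> S" "c \<in> core R S" shows "c \<otimes> x \<in> core R S"
proof -
  have c: "c \<in> S" "\<And>a. a \<in> carrier R \<Longrightarrow> c \<otimes> a = \<zero> \<longleftrightarrow> a \<in> ass R S" using assms(2) core_iff by auto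
  have cx: "c \<otimes> x \<in> S" using S.S_mult assms(1) c(1) by simp
  have "c \<otimes> x \<otimes> a = \<zero> \<longleftrightarrow> a \<in> ass R S" if a: "a \<in> carrier R" for a
  proof
    assume "c \<otimes> x \<otimes> a = \<zero>" thus "a \<in> ass R S" using cx a unfolding ass_iff by blast
  next
    assume "a \<in> ass R S" hence "x \<otimes> a \<in> ass R S" using ideal.I_l_closed[OF I] assms(1) by simp
    hence "c \<otimes> (x \<otimes> a) = \<zero>" using c(2) a assms(1) by simp
    thus "c \<otimes> x \<otimes> a = \<zero>" using assms(1) c(1) a by (simp add: m_assoc)
  qed
  thus ?thesis using cx core_iff by blast
qed

lemma core_no1: assumes ne: "core R S \<noteq> {}" shows "left_denominator_set_no1 R (core R S)"
proof -
  obtain c0 where c0: "c0 \<in> core R S" using ne by blast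
  have cS: "c0 \<in> S" using c0 core_sub by blast
  have mc: "mult_closed_nz R (core R S)"
    unfolding mult_closed_nz_def using core_sub S.S_sub zeroS core_left by blast
  have ore: "left_Ore_cond R (core R S)" unfolding left_Ore_cond_def
  proof (intro ballI)
    fix r s assume r: "r \<in> carrier R" and s: "s \<in> core R S"
    have sS: "s \<in> S" using s core_sub by blast
    obtain s' r' where o: "s' \<in> S" "r' \<in> carrier R" "s' \<otimes> r = r' \<otimes> s" using S.ore[OF r sS] by blast
    have "(c0 \<otimes> s') \<otimes> r = (c0 \<otimes> r') \<otimes> s" using o cS r sS by (simp add: m_assoc)
    moreover have "c0 \<otimes> s' \<in> core R S" by (rule core_right[OF o(1) c0])
    moreover have "c0 \<otimes> r' \<in> carrier R" using cS o by simp
    ultimately show "\<exists>s'\<in>core R S. \<exists>r'\<in>carrier R. s' \<otimes> r = r' \<otimes> s" by blast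
  qed
  have den: "left_denom_cond R (core R S)" unfolding left_denom_cond_def
  proof (intro ballI impI)
    fix r s assume r: "r \<in> carrier R" and s: "s \<in> core R S" and z: "r \<otimes> s = \<zero>"
    have sS: "s \<in> S" using s core_sub by blast
    obtain t where t: "t \<in> S" "t \<otimes> r = \<zero>" using S.den[OF r sS z] by blast
    have "(c0 \<otimes> t) \<otimes> r = \<zero>" using t cS r by (simp add: m_assoc)
    moreover have "c0 \<otimes> t \<in> core R S" by (rule core_right[OF t(1) c0])
    ultimately show "\<exists>t\<in>core R S. t \<otimes> r = \<zero>" by blast
  qed
  show ?thesis unfolding left_denominator_set_no1_def using ne mc ore den by blast
qed

lemma core_ass: assumes ne: "core R S \<noteq> {}" shows "ass R (core R S) = ass R S"
proof
  show "ass R (core R S) \<subseteq> ass R S" using core_sub unfolding ass_def by blast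
  obtain c0 where c0: "c0 \<in> core R S" using ne by blast
  show "ass R S \<subseteq> ass R (core R S)"
  proof
    fix a assume a: "a \<in> ass R S"
    hence aR: "a \<in> carrier R" unfolding ass_def by simp
    have "c0 \<otimes> a = \<zero>" using c0 a aR core_iff by blast
    thus "a \<in> ass R (core R S)" using c0 aR unfolding ass_def by blast
  qed
qed


context assumes ne: "core R S \<noteq> {}"
begin

interpretation C: lden R "core R S" by (rule lden_of_no1[OF RR core_no1[OF ne]])

lemma rel_mono: "loc_rel R (core R S) \<subseteq> loc_rel R S"
  using core_sub unfolding loc_rel_def by blast

lemma theta_fr: assumes "s \<in> core R S" "r \<in> carrier R"
  shows "loc_theta R S (lfrac R (core R S) s r) = lfrac R S s r"
proof -
  have tr: "trans (loc_rel R S)" using S.rel_equiv unfolding equiv_def by blast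
  have "loc_rel R S `` (loc_rel R (core R S) `` {(s,r)}) = loc_rel R S `` {(s,r)}"
  proof
    show "loc_rel R S `` (loc_rel R (core R S) `` {(s,r)}) \<subseteq> loc_rel R S `` {(s,r)}"
    proof
      fix y assume "y \<in> loc_rel R S `` (loc_rel R (core R S) `` {(s,r)})"
      then obtain x where x: "(x, y) \<in> loc_rel R S" "((s,r), x) \<in> loc_rel R (core R S)" by blast
      have "((s,r), x) \<in> loc_rel R S" using x(2) rel_mono by blast
      hence "((s,r), y) \<in> loc_rel R S" using x(1) tr by (meson transD)
      thus "y \<in> loc_rel R S `` {(s,r)}" by simp
    qed
    show "loc_rel R S `` {(s,r)} \<subseteq> loc_rel R S `` (loc_rel R (core R S) `` {(s,r)})"
      using C.rel_refl[OF assms] by blast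
  qed
  thus ?thesis unfolding loc_theta_def lfrac_def .
qed

lemma core_S: "c \<in> core R S \<Longrightarrow> c \<in> S" using core_sub by blast

lemma theta_iso: "loc_theta R S \<in> ring_iso (left_localization R (core R S)) (left_localization R S)"
proof -
  obtain c0 where c0: "c0 \<in> core R S" using ne by blast
  have c0S: "c0 \<in> S" using core_S[OF c0] .
  have hom: "loc_theta R S \<in> ring_hom (left_localization R (core R S)) (left_localization R S)"
  proof (rule ring_hom_memI)
    fix A assume A: "A \<in> carrier (left_localization R (core R S))"
    obtain s r where a: "s \<in> core R S" "r \<in> carrier R" "A = lfrac R (core R S) s r"
      using C.Q_fr[of A] C.L_carrier A by auto
    show "loc_theta R S A \<in> carrier (left_localization R S)"
      using theta_fr[OF a(1,2)] a(3) S.fr_in_carrier[OF core_S[OF a(1)] a(2)] S.L_carrier by simp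
  next
    fix A B assume A: "A \<in> carrier (left_localization R (core R S))" and B: "B \<in> carrier (left_localization R (core R S))"
    obtain s r where a: "s \<in> core R S" "r \<in> carrier R" "A = lfrac R (core R S) s r"
      using C.Q_fr[of A] C.L_carrier A by auto
    obtain s' r' where b: "s' \<in> core R S" "r' \<in> carrier R" "B = lfrac R (core R S) s' r'"
      using C.Q_fr[of B] C.L_carrier B by auto
    obtain u b0 where u: "u \<in> core R S" "b0 \<in> carrier R" "u \<otimes> r = b0 \<otimes> s'" using C.ore[OF a(2) b(1)] by blast
    have us: "u \<otimes> s \<in> core R S" using C.S_mult u(1) a(1) by simp
    have m1: "loc_mult R (core R S) A B = lfrac R (core R S) (u \<otimes> s) (b0 \<otimes> r')"
      using C.mult_char[OF a(1,2) b(1,2) u] a(3) b(3) by simp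
    have m2: "loc_mult R S (lfrac R S s r) (lfrac R S s' r') = lfrac R S (u \<otimes> s) (b0 \<otimes> r')"
      by (rule S.mult_char) (use a b u core_S in auto)
    show "loc_theta R S (A \<otimes>\<^bsub>left_localization R (core R S)\<^esub> B) =
          loc_theta R S A \<otimes>\<^bsub>left_localization R S\<^esub> loc_theta R S B"
      unfolding C.L_mult S.L_mult m1
      using theta_fr[OF us] theta_fr[OF a(1,2)] theta_fr[OF b(1,2)] a(3) b(3) m2 u(2) b(2) by simp
    obtain v b1 where v: "v \<in> core R S" "b1 \<in> carrier R" "v \<otimes> s' = b1 \<otimes> s" using C.common2[OF b(1) a(1)] by blast
    have vs: "v \<otimes> s' \<in> core R S" using C.S_mult v(1) b(1) by simp
    have n1: "loc_add R (core R S) A B = lfrac R (core R S) (v \<otimes> s') ((b1 \<otimes> r) \<oplus> (v \<otimes> r'))"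
      using C.add_char[OF a(1,2) b(1,2) v] a(3) b(3) by simp
    have n2: "loc_add R S (lfrac R S s r) (lfrac R S s' r') = lfrac R S (v \<otimes> s') ((b1 \<otimes> r) \<oplus> (v \<otimes> r'))"
      by (rule S.add_char) (use a b v core_S in auto)
    have vR: "(b1 \<otimes> r) \<oplus> (v \<otimes> r') \<in> carrier R" using v a b by simp
    show "loc_theta R S (A \<oplus>\<^bsub>left_localization R (core R S)\<^esub> B) =
          loc_theta R S A \<oplus>\<^bsub>left_localization R S\<^esub> loc_theta R S B"
      unfolding C.L_add S.L_add n1
      using theta_fr[OF vs vR] theta_fr[OF a(1,2)] theta_fr[OF b(1,2)] a(3) b(3) n2 by simp
  next
    show "loc_theta R S \<one>\<^bsub>left_localization R (core R S)\<^esub> = \<one>\<^bsub>left_localization R S\<^esub>"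
      using C.L_one[OF c0] S.L_one[OF c0S] theta_fr[OF c0] c0S by simp
  qed
  have inj: "inj_on (loc_theta R S) (carrier (left_localization R (core R S)))"
  proof (rule inj_onI)
    fix A B assume A: "A \<in> carrier (left_localization R (core R S))" and B: "B \<in> carrier (left_localization R (core R S))"
      and eq: "loc_theta R S A = loc_theta R S B"
    obtain s r where a: "s \<in> core R S" "r \<in> carrier R" "A = lfrac R (core R S) s r"
      using C.Q_fr[of A] C.L_carrier A by auto
    obtain s' r' where b: "s' \<in> core R S" "r' \<in> carrier R" "B = lfrac R (core R S) s' r'"
      using C.Q_fr[of B] C.L_carrier B by auto
    have "lfrac R S s r = lfrac R S s' r'" using eq theta_fr[OF a(1,2)] theta_fr[OF b(1,2)] a(3) b(3) by simp
    hence "((s,r),(s',r')) \<in> loc_rel R S" using S.fr_eq_iff a b core_S by blast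
    then obtain x y where xy: "x \<in> carrier R" "y \<in> carrier R" "x \<otimes> s = y \<otimes> s'" "x \<otimes> s \<in> S" "x \<otimes> r = y \<otimes> r'"
      unfolding S.rel_iff by blast
    have sR: "s \<in> carrier R" "s' \<in> carrier R" "c0 \<in> carrier R" using a b c0S by auto
    have "lfrac R (core R S) s r = lfrac R (core R S) s' r'"
    proof (rule C.fr_eqI[where x="c0 \<otimes> x" and y="c0 \<otimes> y"])
      show "c0 \<otimes> x \<otimes> s = c0 \<otimes> y \<otimes> s'" using xy(1,2) sR by (simp add: m_assoc xy(3))
      have "c0 \<otimes> x \<otimes> s = c0 \<otimes> (x \<otimes> s)" using xy(1,2) sR by (simp add: m_assoc)
      thus "c0 \<otimes> x \<otimes> s \<in> core R S" using core_right[OF xy(4) c0] by simp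
      show "c0 \<otimes> x \<otimes> r = c0 \<otimes> y \<otimes> r'" using xy(1,2) sR a(2) b(2) by (simp add: m_assoc xy(5))
    qed (use a b xy sR in auto)
    thus "A = B" using a(3) b(3) by simp
  qed
  have surj: "loc_theta R S ` carrier (left_localization R (core R S)) = carrier (left_localization R S)"
  proof
    show "loc_theta R S ` carrier (left_localization R (core R S)) \<subseteq> carrier (left_localization R S)"
      using hom unfolding ring_hom_def by blast
    show "carrier (left_localization R S) \<subseteq> loc_theta R S ` carrier (left_localization R (core R S))"
    proof
      fix Xx assume Xx: "Xx \<in> carrier (left_localization R S)"
      obtain s r where a: "s \<in> S" "r \<in> carrier R" "Xx = lfrac R S s r"
        using S.Q_fr[of Xx] S.L_carrier Xx by auto
      have cs: "c0 \<otimes> s \<in> core R S" using core_right[OF a(1) c0] .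
      have cr: "c0 \<otimes> r \<in> carrier R" using c0S a by simp
      have "Xx = lfrac R S (c0 \<otimes> s) (c0 \<otimes> r)" using S.fr_exp[OF _ a(1,2), of c0] c0S a(3) core_S[OF cs] by simp
      also have "\<dots> = loc_theta R S (lfrac R (core R S) (c0 \<otimes> s) (c0 \<otimes> r))" using theta_fr[OF cs cr] by simp
      finally show "Xx \<in> loc_theta R S ` carrier (left_localization R (core R S))"
        using C.fr_in_carrier[OF cs cr] C.L_carrier by auto
    qed
  qed
  show ?thesis unfolding ring_iso_def bij_betw_def using hom inj surj by blast
qed

lemma theta_one: assumes "s \<in> core R S" "r \<in> carrier R"
  shows "loc_theta R S (lfrac R (core R S) s (s \<otimes> r)) = lfrac R S \<one> r"
proof -
  have sR: "s \<in> carrier R" using assms core_S by auto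
  have "lfrac R S s (s \<otimes> r) = lfrac R S \<one> r"
    by (rule S.fr_eqI[where x="\<one>" and y=s]) (use assms sR core_S oneS in auto)
  thus ?thesis using theta_fr[OF assms(1)] assms sR by simp
qed

end

end


theorem theorem4p2:
  fixes R :: "('a, 'b) ring_scheme" and \<aa> S :: "'a set"
  assumes "ring R"
    and "ideal \<aa> R"
    and "left_denominator_set R S"
    and "ass R S = \<aa>"
    and "core R S \<noteq> {}"
  shows "left_denominator_set_no1 R (core R S) \<and> ass R (core R S) = \<aa>
    \<and> ring (left_localization R (core R S)) \<and> ring (left_localization R S)
    \<and> loc_theta R S \<in> ring_iso (left_localization R (core R S)) (left_localization R S)
    \<and> (\<forall>s\<in>core R S. \<forall>r\<in>carrier R.
          loc_theta R S (lfrac R (core R S) s r) = lfrac R S s r)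
    \<and> (\<forall>s\<in>core R S. \<forall>r\<in>carrier R.
          loc_theta R S (lfrac R (core R S) s (s \<otimes>\<^bsub>R\<^esub> r)) = lfrac R S \<one>\<^bsub>R\<^esub> r)
    \<and> left_localization R (core R S) \<simeq> left_localization R S"
proof -
  have I: "ideal (ass R S) R" using assms(2,4) by simp
  note RR = assms(1) and LD = assms(3) and ne = assms(5)
  have n1: "left_denominator_set_no1 R (core R S)" by (rule core_no1[OF RR LD I ne])
  have a: "ass R (core R S) = \<aa>" using core_ass[OF RR LD I ne] assms(4) by simp
  have r1: "ring (left_localization R (core R S))" by (rule lden.L_ring[OF lden_of_no1[OF RR n1]])
  have r2: "ring (left_localization R S)" by (rule lden.L_ring[OF lden_of_no1[OF RR no1_of_den[OF LD]]])
  have iso: "loc_theta R S \<in> ring_iso (left_localization R (core R S)) (left_localization R S)"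
    by (rule theta_iso[OF RR LD I ne])
  have f1: "\<forall>s\<in>core R S. \<forall>r\<in>carrier R. loc_theta R S (lfrac R (core R S) s r) = lfrac R S s r"
    using theta_fr[OF RR LD I ne] by blast
  have f2: "\<forall>s\<in>core R S. \<forall>r\<in>carrier R.
          loc_theta R S (lfrac R (core R S) s (s \<otimes>\<^bsub>R\<^esub> r)) = lfrac R S \<one>\<^bsub>R\<^esub> r"
    using theta_one[OF RR LD I ne] by blast
  have "left_localization R (core R S) \<simeq> left_localization R S"
    unfolding is_ring_iso_def using iso by blast
  thus ?thesis using n1 a r1 r2 iso f1 f2 by blast
qed

end
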